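(* Let $n\ge 1$ and let $$C^{n,1}=\{(z_0,\dots,z_n)\in\mathbb{C}^{n+1}: -|z_0|^2+|z_1|^2+\cdots+|z_n|^2<0\}.$$ Let $f=(f_0,f_1,\dots,f_n)$ be a biholomorphic self-map of $C^{n,1}$. Then there exist a nowhere vanishing holomorphic function $c$ on the unit ball $\mathbb{B}^n=\{w\in\mathbb{C}^n:|w_1|^2+\cdots+|w_n|^2<1\}$ and a matrix $(a_{ij})_{0\le i,j\le n}$ representing an element of $PU(n,1)$ such that either $$f_0(z_0,\dots,z_n)=c\Big(\frac{z_1}{z_0},\dots,\frac{z_n}{z_0}\Big)\,z_0\quad\text{for all } z\in C^{n,1},$$ or $$f_0(z_0,\dots,z_n)=c\Big(\frac{z_1}{z_0},\dots,\frac{z_n}{z_0}\Big)\,z_0^{-1}\quad\text{for all } z\in C^{n,1},$$ and, for $i=1,\dots,n$, $$f_i(z_0,\dots,z_n)=f_0(z_0,\dots,z_n)\,\frac{\sum_{j=0}^n a_{ij}z_j}{\sum_{j=0}^n a_{0j}z_j}.$$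
   Context: $U(n,1)=\{A\in GL(n+1,\mathbb{C}): A^*JA=J\}$ with $J=\mathrm{diag}(-1,1,\dots,1)$, and $PU(n,1)$ is its quotient by scalar matrices. Note $z_0\neq 0$ on $C^{n,1}$. *)

theory Defs
  imports "HOL-Analysis.Analysis"
begin

text \<open>C^n = complex^'n, C^(n+1) = complex^('n option), coordinate None playing the role of z_0
  and Some i the role of z_1..z_n.\<close>

definition cholo_on :: "(complex^'a::finite) set \<Rightarrow> (complex^'a \<Rightarrow> complex) \<Rightarrow> bool" where
  "cholo_on S g \<longleftrightarrow> (\<forall>z\<in>S. \<exists>L. (g has_derivative L) (at z) \<and> (\<forall>c v. L (c *s v) = c * L v))"

definition vholo_on :: "(complex^'a::finite) set \<Rightarrow> (complex^'a \<Rightarrow> complex^'b::finite) \<Rightarrow> bool" where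
  "vholo_on S f \<longleftrightarrow> (\<forall>i. cholo_on S (\<lambda>z. f z $ i))"

definition biholo_self :: "(complex^'a::finite) set \<Rightarrow> (complex^'a \<Rightarrow> complex^'a) \<Rightarrow> bool" where
  "biholo_self S f \<longleftrightarrow> bij_betw f S S \<and> vholo_on S f \<and> vholo_on S (inv_into S f)"

definition Cn1 :: "(complex^('n::finite option)) set" where
  "Cn1 = {z. - (cmod (z $ None))\<^sup>2 + (\<Sum>i\<in>(UNIV::'n set). (cmod (z $ Some i))\<^sup>2) < 0}"

definition Jn1 :: "complex^('n::finite option)^('n option)" where
  "Jn1 = (\<chi> i j. if i = j then (if i = None then -1 else 1) else 0)"

definition conj_transpose :: "complex^'a::finite^'a \<Rightarrow> complex^'a^'a" where
  "conj_transpose A = (\<chi> i j. cnj (A $ j $ i))"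

definition U_n1 :: "(complex^('n::finite option)^('n option)) set" where
  "U_n1 = {A. conj_transpose A ** Jn1 ** A = Jn1}"

definition PU_rep :: "complex^('n::finite option)^('n option) \<Rightarrow> bool" where
  "PU_rep A \<longleftrightarrow> (\<exists>s U. s \<noteq> 0 \<and> U \<in> U_n1 \<and> A = (\<chi> i j. s * U $ i $ j))"

end

theory Submission
  imports Defs "HOL-Complex_Analysis.Complex_Analysis"
begin

no_notation fps_nth (infixl \<open>$\<close> 75)


section \<open>Basic geometry\<close>

lemma sum_option_UNIV:
  fixes f :: "'n::finite option \<Rightarrow> 'b::comm_monoid_add"
  shows "(\<Sum>k\<in>UNIV. f k) = f None + (\<Sum>i\<in>UNIV. f (Some i))"
proof -
  have "(\<Sum>k\<in>UNIV. f k) = (\<Sum>k\<in>insert None (range Some). f k)"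
    by (simp add: UNIV_option_conv)
  also have "\<dots> = f None + (\<Sum>k\<in>range Some. f k)"
    by (subst sum.insert) auto
  also have "(\<Sum>k\<in>range Some. f k) = (\<Sum>i\<in>UNIV. f (Some i))"
    by (subst sum.reindex) (auto simp: inj_on_def)
  finally show ?thesis .
qed

lemma norm_sq_vec: "(norm (w::complex^'n::finite))^2 = (\<Sum>i\<in>UNIV. (cmod (w$i))^2)"
  unfolding norm_vec_def L2_set_def by (simp add: sum_nonneg)

definition emb :: "complex^'n::finite \<Rightarrow> complex^('n option)" where
  "emb w = (\<chi> j. case j of None \<Rightarrow> 1 | Some i \<Rightarrow> w $ i)"

definition Wp :: "complex^('n::finite option) \<Rightarrow> complex^'n" where
  "Wp z = (\<chi> i. z $ Some i / z $ None)"

definition qf :: "complex^('n::finite option) \<Rightarrow> real" where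
  "qf z = - (cmod (z $ None))\<^sup>2 + (\<Sum>i\<in>UNIV. (cmod (z $ Some i))\<^sup>2)"

lemma emb_None[simp]: "emb w $ None = 1" and emb_Some[simp]: "emb w $ Some i = w $ i"
  by (simp_all add: emb_def)

lemma Wp_nth[simp]: "Wp z $ i = z $ Some i / z $ None"
  by (simp add: Wp_def)

lemma Cn1_iff: "z \<in> Cn1 \<longleftrightarrow> qf z < 0"
  by (simp add: Cn1_def qf_def)

lemma qf_scale: "qf (c *s z) = (cmod c)\<^sup>2 * qf z"
  by (simp add: qf_def norm_mult power_mult_distrib sum_distrib_left algebra_simps)

lemma qf_emb: "qf (emb w) = (norm w)\<^sup>2 - 1"
  by (simp add: qf_def norm_sq_vec)

lemma Cn1_None: "z \<in> Cn1 \<Longrightarrow> z $ None \<noteq> 0"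
  by (auto simp: Cn1_iff qf_def intro: sum_nonneg dest: order.strict_trans1[rotated])
    (metis add.commute add_less_same_cancel2 not_less sum_nonneg zero_le_power2)

lemma Cn1_Some_less: "z \<in> Cn1 \<Longrightarrow> cmod (z $ Some i) < cmod (z $ None)"
proof -
  assume "z \<in> Cn1"
  then have "(\<Sum>i\<in>UNIV. (cmod (z $ Some i))\<^sup>2) < (cmod (z $ None))\<^sup>2"
    by (simp add: Cn1_iff qf_def)
  moreover have "(cmod (z $ Some i))\<^sup>2 \<le> (\<Sum>i\<in>UNIV. (cmod (z $ Some i))\<^sup>2)"
    by (rule member_le_sum) auto
  ultimately have "(cmod (z $ Some i))\<^sup>2 < (cmod (z $ None))\<^sup>2" by linarith
  then show ?thesis by (simp add: power2_less_imp_less)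
qed

lemma decomp: "z $ None \<noteq> 0 \<Longrightarrow> z = (z $ None) *s emb (Wp z)"
  unfolding vec_eq_iff by (auto simp: emb_def split: option.split)

lemma Wp_scale: "c \<noteq> 0 \<Longrightarrow> Wp (c *s z) = Wp z"
  by (simp add: vec_eq_iff)

lemma Wp_emb[simp]: "Wp (emb w) = w"
  by (simp add: vec_eq_iff)

lemma emb_inj: "emb w = emb w' \<Longrightarrow> w = w'"
  by (metis Wp_emb)

lemma scale_emb_in: "t \<noteq> 0 \<Longrightarrow> (t *s emb w \<in> Cn1 \<longleftrightarrow> norm w < 1)"
proof -
  assume "t \<noteq> 0"
  then have "(cmod t)\<^sup>2 > 0" by simp
  then have "t *s emb w \<in> Cn1 \<longleftrightarrow> (norm w)\<^sup>2 < 1"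
    by (simp add: Cn1_iff qf_scale qf_emb mult_less_0_iff)
  also have "\<dots> \<longleftrightarrow> norm w < 1"
    by (simp add: power_less_one_iff)
  finally show ?thesis .
qed

lemma emb_in: "emb w \<in> Cn1 \<longleftrightarrow> norm w < 1"
  using scale_emb_in[of 1 w] by simp

lemma Wp_in: "z \<in> Cn1 \<Longrightarrow> Wp z \<in> ball 0 1"
  using decomp[of z] Cn1_None[of z] scale_emb_in[of "z$None" "Wp z"] by auto


section \<open>Holomorphy infrastructure\<close>

definition clin :: "(complex^'a::finite \<Rightarrow> complex) \<Rightarrow> bool" where
  "clin L \<longleftrightarrow> (\<forall>c v. L (c *s v) = c * L v)"

lemma cholo_onI:
  assumes "\<And>z. z \<in> S \<Longrightarrow> \<exists>L. (g has_derivative L) (at z) \<and> clin L"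
  shows "cholo_on S g"
  using assms unfolding cholo_on_def clin_def by blast

lemma cholo_onE:
  assumes "cholo_on S g" "z \<in> S"
  obtains L where "(g has_derivative L) (at z)" "clin L"
  using assms unfolding cholo_on_def clin_def by blast

lemma cholo_subset: "cholo_on S g \<Longrightarrow> T \<subseteq> S \<Longrightarrow> cholo_on T g"
  unfolding cholo_on_def by blast

lemma cholo_const: "cholo_on S (\<lambda>z. c)"
  by (rule cholo_onI, rule exI[of _ "\<lambda>h. 0"]) (auto simp: clin_def)

lemma cholo_nth: "cholo_on S (\<lambda>z. z $ i)"
  by (rule cholo_onI, rule exI[of _ "\<lambda>h. h $ i"])
    (auto simp: clin_def intro: bounded_linear_imp_has_derivative bounded_linear_vec_nth)

lemma cholo_add: "cholo_on S f \<Longrightarrow> cholo_on S g \<Longrightarrow> cholo_on S (\<lambda>z. f z + g z)"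
proof (rule cholo_onI)
  fix z assume "cholo_on S f" "cholo_on S g" "z \<in> S"
  then obtain L1 L2 where "(f has_derivative L1) (at z)" "clin L1" "(g has_derivative L2) (at z)" "clin L2"
    by (metis cholo_onE)
  then show "\<exists>L. ((\<lambda>z. f z + g z) has_derivative L) (at z) \<and> clin L"
    by (intro exI[of _ "\<lambda>h. L1 h + L2 h"]) (auto intro: has_derivative_add simp: clin_def algebra_simps)
qed

lemma cholo_mult: "cholo_on S f \<Longrightarrow> cholo_on S g \<Longrightarrow> cholo_on S (\<lambda>z. f z * g z)"
proof (rule cholo_onI)
  fix z assume "cholo_on S f" "cholo_on S g" "z \<in> S"
  then obtain L1 L2 where "(f has_derivative L1) (at z)" "clin L1" "(g has_derivative L2) (at z)" "clin L2"
    by (metis cholo_onE)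
  then show "\<exists>L. ((\<lambda>z. f z * g z) has_derivative L) (at z) \<and> clin L"
    by (intro exI[of _ "\<lambda>h. f z * L2 h + L1 h * g z"] conjI has_derivative_mult) (auto simp: clin_def algebra_simps)
qed

lemma cholo_divide: "cholo_on S f \<Longrightarrow> cholo_on S g \<Longrightarrow> (\<And>z. z \<in> S \<Longrightarrow> g z \<noteq> 0) \<Longrightarrow> cholo_on S (\<lambda>z. f z / g z)"
proof (rule cholo_onI)
  fix z assume "cholo_on S f" "cholo_on S g" "z \<in> S" and nz: "\<And>z. z \<in> S \<Longrightarrow> g z \<noteq> 0"
  then obtain L1 L2 where "(f has_derivative L1) (at z)" "clin L1" "(g has_derivative L2) (at z)" "clin L2"
    by (metis cholo_onE)
  with nz[OF \<open>z \<in> S\<close>] show "\<exists>L. ((\<lambda>z. f z / g z) has_derivative L) (at z) \<and> clin L"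
    by (intro exI[of _ "\<lambda>h. (L1 h * g z - f z * L2 h) / (g z * g z)"])
      (intro conjI has_derivative_divide', auto simp: clin_def algebra_simps)
qed

lemma cholo_sum: "finite A \<Longrightarrow> (\<And>a. a \<in> A \<Longrightarrow> cholo_on S (f a)) \<Longrightarrow> cholo_on S (\<lambda>z. \<Sum>a\<in>A. f a z)"
  by (induction A rule: finite_induct) (auto intro: cholo_add cholo_const)

lemma has_derivative_vecI:
  fixes F :: "'a::euclidean_space \<Rightarrow> complex^'b::finite"
  assumes d: "\<And>i. ((\<lambda>x. F x $ i) has_derivative (\<lambda>h. L h $ i)) (at x)"
  shows "(F has_derivative L) (at x)"
proof -
  have bl: "\<And>i. bounded_linear (\<lambda>h. L h $ i)" using d has_derivative_bounded_linear by blast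
  have lin: "\<And>i. linear (\<lambda>h. L h $ i)" using bl bounded_linear.linear by blast
  have "linear L"
  proof (rule linearI)
    fix u v show "L (u + v) = L u + L v"
      using linear_add[OF lin] by (simp add: vec_eq_iff)
  next
    fix r u show "L (r *\<^sub>R u) = r *\<^sub>R L u"
      using linear_cmul[OF lin] by (simp add: vec_eq_iff)
  qed
  then have "bounded_linear L" by (simp add: linear_conv_bounded_linear)
  moreover have "((\<lambda>y. (F y - F x - L (y - x)) /\<^sub>R norm (y - x)) \<longlongrightarrow> 0) (at x)"
  proof (rule vec_tendstoI)
    fix i
    have "((\<lambda>y. (F y $ i - F x $ i - L (y - x) $ i) /\<^sub>R norm (y - x)) \<longlongrightarrow> 0) (at x)"
      using d[of i] unfolding has_derivative_at_within by simp
    then show "((\<lambda>y. ((F y - F x - L (y - x)) /\<^sub>R norm (y - x)) $ i) \<longlongrightarrow> 0 $ i) (at x)"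
      by simp
  qed
  ultimately show ?thesis unfolding has_derivative_at_within by simp
qed

lemma cholo_compose:
  fixes F :: "complex^'a::finite \<Rightarrow> complex^'b::finite"
  assumes F: "vholo_on S F" and FT: "\<And>z. z \<in> S \<Longrightarrow> F z \<in> T" and g: "cholo_on T g"
  shows "cholo_on S (\<lambda>z. g (F z))"
proof (rule cholo_onI)
  fix z assume z: "z \<in> S"
  have "\<forall>i. \<exists>L. ((\<lambda>z. F z $ i) has_derivative L) (at z) \<and> clin L"
    using F z unfolding vholo_on_def by (metis cholo_onE)
  then obtain Lf where Lf: "\<And>i. ((\<lambda>z. F z $ i) has_derivative Lf i) (at z) \<and> clin (Lf i)"
    by metis
  define LF where "LF h = (\<chi> i. Lf i h)" for h
  have dF: "(F has_derivative LF) (at z)"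
    by (rule has_derivative_vecI) (simp add: LF_def Lf)
  have cF: "LF (c *s h) = c *s LF h" for c h
    using Lf by (simp add: LF_def vec_eq_iff clin_def)
  obtain Lg where dg: "(g has_derivative Lg) (at (F z))" and cg: "clin Lg"
    using g FT[OF z] by (metis cholo_onE)
  show "\<exists>L. ((\<lambda>z. g (F z)) has_derivative L) (at z) \<and> clin L"
    using has_derivative_compose[OF dF dg] cg cF
    by (intro exI[of _ "\<lambda>h. Lg (LF h)"]) (auto simp: clin_def)
qed

lemma has_derivative_line:
  fixes v :: "complex^'a::finite"
  shows "((\<lambda>t. p + t *s v) has_derivative (\<lambda>h. h *s v)) (at t)"
proof -
  have "linear (\<lambda>h::complex. h *s v)"
    by (rule linearI) (auto simp: vec_eq_iff algebra_simps)
  then have "bounded_linear (\<lambda>h::complex. h *s v)" by (simp add: linear_conv_bounded_linear)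
  then have d: "((\<lambda>t. t *s v) has_derivative (\<lambda>h. h *s v)) (at t)"
    by (rule bounded_linear_imp_has_derivative)
  show ?thesis
    using has_derivative_add[OF has_derivative_const[of p] d] by simp
qed

lemma cholo_line_deriv:
  fixes g :: "complex^'a::finite \<Rightarrow> complex"
  assumes g: "cholo_on T g" and "p + t *s v \<in> T"
  shows "\<exists>D. ((\<lambda>t. g (p + t *s v)) has_field_derivative D) (at t)"
proof -
  obtain L where dg: "(g has_derivative L) (at (p + t *s v))" and cg: "clin L"
    using assms by (metis cholo_onE)
  have "((\<lambda>t. g (p + t *s v)) has_derivative (\<lambda>h. L (h *s v))) (at t)"
    using has_derivative_compose[OF has_derivative_line dg] .
  moreover have "(\<lambda>h. L (h *s v)) = (*) (L v)"
    using cg by (auto simp: clin_def fun_eq_iff mult.commute)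
  ultimately show ?thesis unfolding has_field_derivative_def by auto
qed

lemma cholo_line:
  fixes g :: "complex^'a::finite \<Rightarrow> complex"
  assumes g: "cholo_on T g" and A: "\<And>t. t \<in> A \<Longrightarrow> p + t *s v \<in> T"
  shows "(\<lambda>t. g (p + t *s v)) holomorphic_on A"
  unfolding holomorphic_on_def
  using cholo_line_deriv[OF g A] field_differentiable_def field_differentiable_at_within by blast

lemma cholo_imp_continuous:
  assumes "cholo_on S g" "z \<in> S" shows "isCont g z"
  using assms by (metis cholo_onE has_derivative_continuous)


lemma Cn1_ratio_bound: "z \<in> Cn1 \<Longrightarrow> cmod (z $ Some i / z $ None) < 1"
  using Cn1_Some_less[of z i] Cn1_None[of z] by (simp add: norm_divide divide_less_eq)

lemma fiber_const:
  assumes F: "vholo_on Cn1 F" and FC: "\<And>z. z \<in> Cn1 \<Longrightarrow> F z \<in> Cn1"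
    and w: "norm w < 1" and t: "t \<noteq> 0"
  shows "Wp (F (t *s emb w)) = Wp (F (emb w))"
proof -
  have "F (t *s emb w) $ Some i / F (t *s emb w) $ None = F (emb w) $ Some i / F (emb w) $ None" for i
  proof -
    define h where "h s = F (s *s emb w) $ Some i / F (s *s emb w) $ None" for s
    have inC: "s \<in> UNIV - {0} \<Longrightarrow> 0 + s *s emb w \<in> Cn1" for s
      using scale_emb_in[of s w] w by auto
    have hol: "h holomorphic_on (UNIV - {0})"
    proof -
      have 1: "(\<lambda>s. F (0 + s *s emb w) $ Some i) holomorphic_on (UNIV - {0})"
        using F inC unfolding vholo_on_def by (intro cholo_line) auto
      have 2: "(\<lambda>s. F (0 + s *s emb w) $ None) holomorphic_on (UNIV - {0})"
        using F inC unfolding vholo_on_def by (intro cholo_line) auto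
      have "(\<lambda>s. F (0 + s *s emb w) $ Some i / F (0 + s *s emb w) $ None) holomorphic_on (UNIV - {0})"
        using 1 2 inC FC Cn1_None by (intro holomorphic_on_divide) auto
      then show ?thesis by (simp add: h_def[abs_def])
    qed
    have bd: "s \<noteq> 0 \<Longrightarrow> cmod (h s) < 1" for s
      using inC[of s] FC Cn1_ratio_bound by (auto simp: h_def)
    have "\<exists>B. eventually (\<lambda>z. norm (h z) \<le> B) (at 0)"
      using bd by (intro exI[of _ 1]) (auto simp: eventually_at_filter less_imp_le)
    then obtain g where holg: "g holomorphic_on UNIV" and gh: "\<And>z. z \<in> UNIV - {0} \<Longrightarrow> g z = h z"
      using holomorphic_on_extend_bounded[OF hol] by auto
    have "bounded (range g)"
    proof -
      have "g z \<in> cball 0 (max 1 (cmod (g 0)))" for z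
      proof (cases "z = 0")
        case False
        then have "cmod (g z) < 1" using bd gh by simp
        then show ?thesis by simp
      qed simp
      then have "range g \<subseteq> cball 0 (max 1 (cmod (g 0)))" by blast
      then show ?thesis using bounded_cball bounded_subset by blast
    qed
    then have "g constant_on UNIV" using Liouville_theorem holg by blast
    then have "g t = g 1" by (auto simp: constant_on_def)
    then have "h t = h 1" using gh t by simp
    then show ?thesis by (simp add: h_def)
  qed
  then show ?thesis by (simp add: vec_eq_iff)
qed


lemma nonessential_lemma:
  fixes F :: "complex \<Rightarrow> complex"
  assumes hol: "F holomorphic_on (-{0})" and inj: "inj_on F (-{0})"
  shows "(\<exists>l. (F \<longlongrightarrow> l) (at 0)) \<or> (\<exists>l. ((inverse \<circ> F) \<longlongrightarrow> l) (at 0))"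
proof (rule ccontr)
  assume "\<not> ?thesis"
  then have n1: "\<And>l. \<not> (F \<longlongrightarrow> l) (at 0)" and n2: "\<And>l. \<not> ((inverse \<circ> F) \<longlongrightarrow> l) (at 0)"
    by auto
  have "F holomorphic_on (ball 0 1 - {0})"
    using hol by (rule holomorphic_on_subset) auto
  then have cl: "closure (F ` (ball 0 1 - {0})) = UNIV"
    using Casorati_Weierstrass[of "ball 0 1" 0 F] n1 n2 by auto
  have sub: "- cball 0 1 \<subseteq> - {0::complex}" by auto
  have op: "open (F ` (- cball 0 1))"
    using holomorphic_on_subset[OF hol sub] inj_on_subset[OF inj sub]
    by (intro open_mapping_thm3) auto
  have "F ` (- cball 0 1) \<inter> F ` (ball 0 1 - {0}) = {}"
  proof -
    { fix x y assume x: "x \<in> - cball (0::complex) 1" and y: "y \<in> ball 0 1 - {0}" and e: "F x = F y"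
      have "x \<in> -{0}" "y \<in> -{0}" using x y by auto
      then have "x = y" using inj e by (auto dest: inj_onD)
      with x y have False by auto }
    then show ?thesis by blast
  qed
  then have "F ` (- cball 0 1) \<inter> closure (F ` (ball 0 1 - {0})) = {}"
    using open_Int_closure_eq_empty[OF op] by blast
  then have "F ` (- cball 0 1) = {}" using cl by simp
  moreover have "(2::complex) \<in> - cball 0 1" by simp
  ultimately show False by blast
qed

lemma no_nonzero_limit:
  fixes F :: "complex \<Rightarrow> complex"
  assumes hol: "F holomorphic_on (-{0})" and inj: "inj_on F (-{0})" and img: "F ` (-{0}) = -{0}"
    and lim: "(F \<longlongrightarrow> l) (at 0)" and l: "l \<noteq> 0"
  shows False
proof -
  define G where "G = (\<lambda>y. if y = 0 then l else F y)"
  have holG: "G holomorphic_on UNIV"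
    unfolding G_def using hol lim by (intro removable_singularity) (auto simp: Compl_eq_Diff_UNIV)
  obtain t1 where t1: "t1 \<noteq> 0" "F t1 = l"
    using img l by (metis ComplD ComplI imageE singletonD singletonI)
  define r where "r = norm t1 / 2"
  have r: "r > 0" using t1 by (simp add: r_def)
  have disj: "ball 0 r \<inter> ball t1 r = {}"
  proof -
    { fix x assume "x \<in> ball 0 r" "x \<in> ball t1 r"
      then have "norm t1 < r + r" using norm_triangle_ineq[of x "t1 - x"]
        by (auto simp: dist_norm norm_minus_commute)
      then have False by (simp add: r_def) }
    then show ?thesis by blast
  qed
  have t1nb: "t1 \<notin> ball 0 r" using t1 by (simp add: r_def)
  have injG: "inj_on G (ball 0 r)"
  proof (rule inj_onI)
    fix x y assume x: "x \<in> ball 0 r" and y: "y \<in> ball 0 r" and e: "G x = G y"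
    show "x = y"
    proof (cases "x = 0"; cases "y = 0")
      assume "x = 0" "y \<noteq> 0"
      then have "F y = F t1" using e t1 by (simp add: G_def)
      then have "y = t1" using inj \<open>y \<noteq> 0\<close> t1 by (auto dest: inj_onD)
      then show ?thesis using y t1nb by simp
    next
      assume "x \<noteq> 0" "y = 0"
      then have "F x = F t1" using e t1 by (simp add: G_def)
      then have "x = t1" using inj \<open>x \<noteq> 0\<close> t1 by (auto dest: inj_onD)
      then show ?thesis using x t1nb by simp
    next
      assume "x \<noteq> 0" "y \<noteq> 0"
      then show ?thesis using e inj by (auto simp: G_def dest: inj_onD)
    qed simp
  qed
  have o0: "open (G ` ball 0 r)"
    using holomorphic_on_subset[OF holG] injG by (intro open_mapping_thm3) auto
  have sub1: "ball t1 r \<subseteq> -{0}"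
    using disj r by auto
  have o1: "open (F ` ball t1 r)"
    using holomorphic_on_subset[OF hol sub1] inj_on_subset[OF inj sub1] by (intro open_mapping_thm3) auto
  have "l \<in> G ` ball 0 r" using r by (force simp: G_def)
  moreover have "l \<in> F ` ball t1 r" using r t1 by force
  ultimately have "l \<in> G ` ball 0 r \<inter> F ` ball t1 r" by blast
  moreover have "open (G ` ball 0 r \<inter> F ` ball t1 r)" using o0 o1 by blast
  ultimately obtain e where e: "e > 0" "ball l e \<subseteq> G ` ball 0 r \<inter> F ` ball t1 r"
    by (meson openE)
  define y where "y = l + of_real (e/2)"
  have "y \<in> ball l e" using e by (simp add: y_def dist_norm)
  then have "y \<in> G ` ball 0 r" "y \<in> F ` ball t1 r" using e by blast+
  then obtain s0 s1 where s0: "s0 \<in> ball 0 r" "G s0 = y" and s1: "s1 \<in> ball t1 r" "F s1 = y"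
    by (metis imageE)
  have "y \<noteq> l" using e by (simp add: y_def)
  then have "s0 \<noteq> 0" using s0 by (auto simp: G_def)
  then have "F s0 = F s1" using s0 s1 by (simp add: G_def)
  moreover have "s1 \<noteq> 0" using s1 sub1 by auto
  ultimately have "s0 = s1" using inj \<open>s0 \<noteq> 0\<close> by (auto dest: inj_onD)
  then show False using s0 s1 disj by blast
qed

lemma limits_at_0:
  fixes F :: "complex \<Rightarrow> complex"
  assumes hol: "F holomorphic_on (-{0})" and inj: "inj_on F (-{0})" and img: "F ` (-{0}) = -{0}"
  shows "(F \<longlongrightarrow> 0) (at 0) \<or> ((inverse \<circ> F) \<longlongrightarrow> 0) (at 0)"
proof -
  from nonessential_lemma[OF hol inj] show ?thesis
  proof
    assume "\<exists>l. (F \<longlongrightarrow> l) (at 0)"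
    then obtain l where "(F \<longlongrightarrow> l) (at 0)" by blast
    moreover have "l = 0" using no_nonzero_limit[OF hol inj img] calculation by blast
    ultimately show ?thesis by simp
  next
    assume "\<exists>l. ((inverse \<circ> F) \<longlongrightarrow> l) (at 0)"
    then obtain l where lim: "((inverse \<circ> F) \<longlongrightarrow> l) (at 0)" by blast
    show ?thesis
    proof (cases "l = 0")
      case False
      then have "((\<lambda>x. inverse ((inverse \<circ> F) x)) \<longlongrightarrow> inverse l) (at 0)"
        by (intro tendsto_inverse lim)
      then have "(F \<longlongrightarrow> inverse l) (at 0)" by simp
      moreover have "inverse l \<noteq> 0" using False by simp
      ultimately show ?thesis using no_nonzero_limit[OF hol inj img] by blast
    qed (use lim in simp)
  qed
qed


lemma core_case:
  fixes F :: "complex \<Rightarrow> complex"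
  assumes hol: "F holomorphic_on (-{0})" and inj: "inj_on F (-{0})" and img: "F ` (-{0}) = -{0}"
    and l0: "(F \<longlongrightarrow> 0) (at 0)" and linf: "((inverse \<circ> F) \<longlongrightarrow> 0) at_infinity"
  shows "\<exists>c. c \<noteq> 0 \<and> (\<forall>t. t \<noteq> 0 \<longrightarrow> F t = c * t)"
proof -
  define G where "G = (\<lambda>y. if y = 0 then 0 else F y)"
  have holG: "G holomorphic_on UNIV"
    unfolding G_def using hol l0 by (intro removable_singularity) (auto simp: Compl_eq_Diff_UNIV)
  have Fnz: "t \<noteq> 0 \<Longrightarrow> F t \<noteq> 0" for t using img by blast
  have Gnz: "t \<noteq> 0 \<Longrightarrow> G t \<noteq> 0" for t using Fnz by (simp add: G_def)
  have injG: "inj_on G UNIV"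
  proof (rule inj_onI)
    fix x y assume e: "G x = G y"
    show "x = y"
    proof (cases "x = 0"; cases "y = 0")
      assume "x = 0" "y \<noteq> 0" then show ?thesis using e Gnz by (simp add: G_def)
    next
      assume "x \<noteq> 0" "y = 0" then show ?thesis using e Gnz by (simp add: G_def)
    next
      assume "x \<noteq> 0" "y \<noteq> 0" then show ?thesis using e inj by (auto simp: G_def dest: inj_onD)
    qed simp
  qed
  have "((inverse \<circ> G) \<longlongrightarrow> 0) at_infinity"
  proof (rule Lim_transform_eventually[OF linf])
    have "eventually (\<lambda>x. norm x \<ge> 1) (at_infinity :: complex filter)"
      by (simp add: eventually_at_infinity) blast
    then show "eventually (\<lambda>x. (inverse \<circ> F) x = (inverse \<circ> G) x) at_infinity"
      by eventually_elim (auto simp: G_def)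
  qed
  then obtain a n where an: "\<And>z. G z = (\<Sum>i\<le>n. a i * z^i)"
    using pole_at_infinity[OF holG] by blast
  have a0: "a 0 = 0" using an[of 0] by (simp add: G_def)
  have dG: "deriv G 0 \<noteq> 0"
    using holomorphic_injective_imp_regular[OF holG _ injG] by simp
  show ?thesis
  proof (cases n)
    case 0
    then have "G 1 = 0" using an[of 1] a0 by simp
    then show ?thesis using Gnz[of 1] by simp
  next
    case (Suc m)
    define H where "H z = (\<Sum>i\<le>m. a (Suc i) * z^i)" for z
    have GH: "G z = z * H z" for z
    proof -
      have "G z = a 0 + (\<Sum>i\<le>m. a (Suc i) * z^Suc i)"
        using an[of z] unfolding Suc sum.atMost_Suc_shift by (simp del: sum.atMost_Suc)
      then show ?thesis
        by (simp add: a0 H_def sum_distrib_left algebra_simps del: sum.atMost_Suc)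
    qed
    have holH: "H holomorphic_on UNIV" unfolding H_def by (intro holomorphic_intros)
    have dH: "(H has_field_derivative deriv H 0) (at 0)"
      using holH by (simp add: holomorphic_derivI)
    have "((\<lambda>z. z * H z) has_field_derivative 1 * H 0 + deriv H 0 * 0) (at 0)"
      using DERIV_mult[OF DERIV_ident dH] by simp
    then have "deriv G 0 = H 0"
      using GH DERIV_imp_deriv by (simp add: fun_eq_iff[symmetric] GH[abs_def])
    then have H0: "H 0 \<noteq> 0" using dG by simp
    have Hnz: "H z \<noteq> 0" for z
    proof (cases "z = 0")
      case False then show ?thesis using Gnz[of z] GH[of z] by auto
    qed (use H0 in simp)
    have coef: "\<forall>i\<in>{1..m}. a (Suc i) = 0"
    proof (rule ccontr)
      assume "\<not> ?thesis"
      then have "(\<lambda>i. a (Suc i)) 0 = 0 \<or> (\<exists>i\<in>{1..m}. (\<lambda>i. a (Suc i)) i \<noteq> 0)" by auto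
      then obtain z where "(\<Sum>i\<le>m. (\<lambda>i. a (Suc i)) i * z^i) = 0"
        by (rule fundamental_theorem_of_algebra)
      then show False using Hnz[of z] by (simp add: H_def)
    qed
    have Hc: "H z = a 1" for z
    proof -
      have "H z = (\<Sum>i\<in>insert 0 {1..m}. a (Suc i) * z^i)"
        unfolding H_def by (rule sum.cong) auto
      also have "\<dots> = a 1"
        using coef by (subst sum.insert) auto
      finally show ?thesis .
    qed
    have "a 1 \<noteq> 0" using H0 Hc by simp
    moreover have "\<forall>t. t \<noteq> 0 \<longrightarrow> F t = a 1 * t"
    proof (intro allI impI)
      fix t :: complex assume "t \<noteq> 0"
      then have "F t = G t" by (simp add: G_def)
      then show "F t = a 1 * t" using GH[of t] Hc[of t] by (simp add: mult.commute)
    qed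
    ultimately show ?thesis by blast
  qed
qed

lemma autCstar:
  fixes F :: "complex \<Rightarrow> complex"
  assumes hol: "F holomorphic_on (-{0})" and inj: "inj_on F (-{0})" and img: "F ` (-{0}) = -{0}"
  shows "\<exists>c. c \<noteq> 0 \<and> ((\<forall>t. t \<noteq> 0 \<longrightarrow> F t = c * t) \<or> (\<forall>t. t \<noteq> 0 \<longrightarrow> F t = c / t))"
proof -
  define K where "K = F \<circ> inverse"
  have holK: "K holomorphic_on (-{0})"
    unfolding K_def by (rule holomorphic_on_compose) (auto intro!: holomorphic_intros holomorphic_on_subset[OF hol])
  have invimg: "inverse ` (-{0::complex}) = -{0}"
  proof
    show "inverse ` (-{0::complex}) \<subseteq> -{0}" by auto
    show "-{0} \<subseteq> inverse ` (-{0::complex})"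
    proof
      fix x :: complex assume "x \<in> -{0}"
      then have "inverse x \<in> -{0}" "x = inverse (inverse x)" by auto
      then show "x \<in> inverse ` (-{0})" by blast
    qed
  qed
  have injK: "inj_on K (-{0})"
    unfolding K_def by (rule comp_inj_on) (auto simp: inj_on_def invimg inj[unfolded inj_on_def])
  have imgK: "K ` (-{0}) = -{0}"
      proof -
    have "K ` (-{0}) = F ` (inverse ` (-{0}))" by (simp add: K_def image_comp)
    then show ?thesis by (simp add: invimg img)
  qed
  have KF: "K \<circ> inverse = F" by (auto simp: K_def fun_eq_iff)
  have Fnz: "t \<noteq> 0 \<Longrightarrow> F t \<noteq> 0" for t using img by blast
  have A0: "(F \<longlongrightarrow> 0) (at 0) \<or> ((inverse \<circ> F) \<longlongrightarrow> 0) (at 0)"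
    by (rule limits_at_0[OF hol inj img])
  have Ainf: "(F \<longlongrightarrow> 0) at_infinity \<or> ((inverse \<circ> F) \<longlongrightarrow> 0) at_infinity"
  proof -
    have "(K \<longlongrightarrow> 0) (at 0) \<or> ((inverse \<circ> K) \<longlongrightarrow> 0) (at 0)"
      by (rule limits_at_0[OF holK injK imgK])
    then show ?thesis
      unfolding lim_at_infinity_0 by (simp add: K_def o_assoc)
  qed
  from A0 Ainf show ?thesis
  proof (elim disjE)
    assume "(F \<longlongrightarrow> 0) (at 0)" "((inverse \<circ> F) \<longlongrightarrow> 0) at_infinity"
    then show ?thesis using core_case[OF hol inj img] by blast
  next
    assume a: "((inverse \<circ> F) \<longlongrightarrow> 0) (at 0)" "(F \<longlongrightarrow> 0) at_infinity"
    have "(K \<longlongrightarrow> 0) (at 0)" using a(2) unfolding lim_at_infinity_0 K_def .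
    moreover have "((inverse \<circ> K) \<longlongrightarrow> 0) at_infinity"
    proof -
      have "inverse \<circ> K \<circ> inverse = inverse \<circ> F" by (auto simp: K_def fun_eq_iff)
      then show ?thesis using a(1) unfolding lim_at_infinity_0 by simp
    qed
    ultimately obtain c where c: "c \<noteq> 0" "\<forall>t. t \<noteq> 0 \<longrightarrow> K t = c * t"
      using core_case[OF holK injK imgK] by blast
    have "\<forall>t. t \<noteq> 0 \<longrightarrow> F t = c / t"
      using c by (auto simp: K_def divide_inverse) (metis inverse_inverse_eq inverse_nonzero_iff_nonzero)
    then show ?thesis using c by blast
  next
    assume a: "(F \<longlongrightarrow> 0) (at 0)" "(F \<longlongrightarrow> 0) at_infinity"
    define G where "G = (\<lambda>y. if y = 0 then 0 else F y)"
    have holG: "G holomorphic_on UNIV"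
      unfolding G_def using hol a(1) by (intro removable_singularity) (auto simp: Compl_eq_Diff_UNIV)
    have "(G \<longlongrightarrow> 0) at_infinity"
    proof (rule Lim_transform_eventually[OF a(2)])
      have "eventually (\<lambda>x. norm x \<ge> 1) (at_infinity :: complex filter)"
        by (simp add: eventually_at_infinity) blast
      then show "eventually (\<lambda>x. F x = G x) at_infinity"
        by eventually_elim (auto simp: G_def)
    qed
    then have "G 1 = 0" using Liouville_weak[OF holG] by blast
    then show ?thesis using Fnz[of 1] by (simp add: G_def)
  next
    assume a: "((inverse \<circ> F) \<longlongrightarrow> 0) (at 0)" "((inverse \<circ> F) \<longlongrightarrow> 0) at_infinity"
    define G where "G = (\<lambda>y. if y = 0 then 0 else (inverse \<circ> F) y)"
    have "(inverse \<circ> F) holomorphic_on (UNIV - {0})"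
      using hol Fnz by (auto intro!: holomorphic_intros simp: o_def Compl_eq_Diff_UNIV[symmetric])
    then have holG: "G holomorphic_on UNIV"
      unfolding G_def using a(1) by (intro removable_singularity) (auto simp: o_def)
    have "(G \<longlongrightarrow> 0) at_infinity"
    proof (rule Lim_transform_eventually[OF a(2)])
      have "eventually (\<lambda>x. norm x \<ge> 1) (at_infinity :: complex filter)"
        by (simp add: eventually_at_infinity) blast
      then show "eventually (\<lambda>x. (inverse \<circ> F) x = G x) at_infinity"
        by eventually_elim (auto simp: G_def)
    qed
    then have "G 1 = 0" using Liouville_weak[OF holG] by blast
    then show ?thesis using Fnz[of 1] by (simp add: G_def)
  qed
qed


lemma vholo_emb: "vholo_on S (emb :: complex^'n::finite \<Rightarrow> complex^('n option))"
  unfolding vholo_on_def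
proof
  fix j :: "'n option"
  show "cholo_on S (\<lambda>z. emb z $ j)"
    by (cases j) (simp_all add: cholo_const cholo_nth)
qed

lemma vholo_scale_emb: "vholo_on S (\<lambda>w. c *s (emb w :: complex^('n::finite option)))"
  unfolding vholo_on_def
proof
  fix j :: "'n option"
  show "cholo_on S (\<lambda>z. (c *s emb z) $ j)"
    by (cases j) (simp_all add: cholo_const cholo_nth cholo_mult)
qed

lemma fiber_eq:
  assumes F: "vholo_on Cn1 F" and FC: "\<And>z. z \<in> Cn1 \<Longrightarrow> F z \<in> Cn1" and z: "z \<in> Cn1"
  shows "Wp (F z) = Wp (F (emb (Wp z)))"
proof -
  have "z = (z $ None) *s emb (Wp z)" using decomp Cn1_None z by blast
  moreover have "norm (Wp z) < 1" using Wp_in[OF z] by simp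
  ultimately show ?thesis using fiber_const[OF F FC, of "Wp z" "z $ None"] Cn1_None[OF z] by simp
qed

lemma phi_in:
  assumes FC: "\<And>z. z \<in> Cn1 \<Longrightarrow> F z \<in> Cn1" and w: "norm w < 1"
  shows "norm (Wp (F (emb w))) < 1"
  using Wp_in[OF FC] emb_in w by auto

lemma phi_holo:
  assumes F: "vholo_on Cn1 F" and FC: "\<And>z. z \<in> Cn1 \<Longrightarrow> F z \<in> Cn1"
  shows "vholo_on (ball 0 1) (\<lambda>w. Wp (F (emb w)))"
  unfolding vholo_on_def
proof
  fix i
  have inC: "w \<in> ball 0 1 \<Longrightarrow> emb w \<in> Cn1" for w by (simp add: emb_in)
  have 1: "cholo_on (ball 0 1) (\<lambda>w. F (emb w) $ Some i)"
    by (rule cholo_compose[OF vholo_emb inC]) (use F in \<open>auto simp: vholo_on_def\<close>)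
  have 2: "cholo_on (ball 0 1) (\<lambda>w. F (emb w) $ None)"
    by (rule cholo_compose[OF vholo_emb inC]) (use F in \<open>auto simp: vholo_on_def\<close>)
  show "cholo_on (ball 0 1) (\<lambda>w. Wp (F (emb w)) $ i)"
  proof -
    have "\<And>z. z \<in> ball 0 1 \<Longrightarrow> F (emb z) $ None \<noteq> 0" using inC FC Cn1_None by blast
    then show ?thesis using cholo_divide[OF 1 2] by simp
  qed
qed

lemma phi_psi:
  assumes F: "vholo_on Cn1 F" and FC: "\<And>z. z \<in> Cn1 \<Longrightarrow> F z \<in> Cn1"
    and GC: "\<And>z. z \<in> Cn1 \<Longrightarrow> G z \<in> Cn1" and FG: "\<And>z. z \<in> Cn1 \<Longrightarrow> F (G z) = z"
    and w: "norm w < 1"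
  shows "Wp (F (emb (Wp (G (emb w))))) = w"
proof -
  have e: "emb w \<in> Cn1" using w emb_in by auto
  have "Wp (F (G (emb w))) = Wp (F (emb (Wp (G (emb w)))))"
    by (rule fiber_eq[OF F FC GC[OF e]])
  then show ?thesis using FG[OF e] by simp
qed


lemma Jn1_nth: "(Jn1 :: complex^('n::finite option)^('n option)) $ x $ y =
    (if x = y then (if x = None then -1 else 1) else 0)"
  by (simp add: Jn1_def)

lemma UJ_entry:
  fixes A B :: "complex^('n::finite option)^('n option)"
  shows "(conj_transpose A ** Jn1 ** B) $ x $ y =
    - cnj (A$None$x) * B$None$y + (\<Sum>i\<in>UNIV. cnj (A$Some i$x) * B$Some i$y)"
proof -
  have "(conj_transpose A ** Jn1) $ x $ l = cnj (A$l$x) * (if l = None then -1 else 1)" for l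
    by (simp add: matrix_matrix_mult_def conj_transpose_def Jn1_nth if_distrib[of "\<lambda>v. _ * v"] sum.delta' cong: if_cong)
  then show ?thesis
    by (simp add: matrix_matrix_mult_def sum_option_UNIV)
qed

lemma U_n1_iff:
  "M \<in> U_n1 \<longleftrightarrow> (\<forall>x y. - cnj (M$None$x) * M$None$y + (\<Sum>i\<in>UNIV. cnj (M$Some i$x) * M$Some i$y) = Jn1 $ x $ y)"
  by (simp add: U_n1_def vec_eq_iff UJ_entry)

definition Pf :: "complex^('n::finite option)^('n option) \<Rightarrow> complex^('n option) \<Rightarrow> complex" where
  "Pf B z = (\<Sum>x\<in>UNIV. \<Sum>y\<in>UNIV. cnj (z$x) * B$x$y * z$y)"

lemma cnorm_sq: "complex_of_real ((cmod w)\<^sup>2) = cnj w * w"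
  by (metis complex_norm_square mult.commute)

lemma dsum:
  fixes a b :: "'x::finite \<Rightarrow> complex" and c d :: "'i::finite \<Rightarrow> 'x \<Rightarrow> complex"
  shows "(\<Sum>x\<in>UNIV. \<Sum>y\<in>UNIV. - (a x * b y) + (\<Sum>i\<in>UNIV. c i x * d i y)) =
    - ((\<Sum>x\<in>UNIV. a x) * (\<Sum>y\<in>UNIV. b y)) + (\<Sum>i\<in>UNIV. (\<Sum>x\<in>UNIV. c i x) * (\<Sum>y\<in>UNIV. d i y))"
proof -
  have 1: "(\<Sum>i\<in>UNIV. (\<Sum>x\<in>UNIV. c i x) * (\<Sum>y\<in>UNIV. d i y)) = (\<Sum>i\<in>UNIV. \<Sum>x\<in>UNIV. \<Sum>y\<in>UNIV. c i x * d i y)"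
    by (simp add: sum_product)
  also have "\<dots> = (\<Sum>x\<in>UNIV. \<Sum>i\<in>UNIV. \<Sum>y\<in>UNIV. c i x * d i y)"
    by (rule sum.swap)
  also have "\<dots> = (\<Sum>x\<in>UNIV. \<Sum>y\<in>UNIV. \<Sum>i\<in>UNIV. c i x * d i y)"
    by (rule sum.cong[OF refl], rule sum.swap)
  finally have 2: "(\<Sum>i\<in>UNIV. (\<Sum>x\<in>UNIV. c i x) * (\<Sum>y\<in>UNIV. d i y)) = (\<Sum>x\<in>UNIV. \<Sum>y\<in>UNIV. \<Sum>i\<in>UNIV. c i x * d i y)" .
  have 3: "(\<Sum>x\<in>UNIV. a x) * (\<Sum>y\<in>UNIV. b y) = (\<Sum>x\<in>UNIV. \<Sum>y\<in>UNIV. a x * b y)"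
    by (simp add: sum_product)
  show ?thesis unfolding 2 3 by (simp add: sum.distrib sum_negf sum_subtractf)
qed

lemma Pf_qf:
  fixes A :: "complex^('n::finite option)^('n option)"
  shows "Pf (conj_transpose A ** Jn1 ** A) z = of_real (qf (A *v z))"
proof -
  have "Pf (conj_transpose A ** Jn1 ** A) z =
     (\<Sum>x\<in>UNIV. \<Sum>y\<in>UNIV. - (cnj (A$None$x * z$x) * (A$None$y * z$y))
        + (\<Sum>i\<in>UNIV. cnj (A$Some i$x * z$x) * (A$Some i$y * z$y)))"
    unfolding Pf_def UJ_entry
    by (intro sum.cong refl) (simp add: algebra_simps sum_distrib_left sum_distrib_right)
  also have "\<dots> = - (cnj (\<Sum>x\<in>UNIV. A$None$x * z$x) * (\<Sum>y\<in>UNIV. A$None$y * z$y))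
        + (\<Sum>i\<in>UNIV. cnj (\<Sum>x\<in>UNIV. A$Some i$x * z$x) * (\<Sum>y\<in>UNIV. A$Some i$y * z$y))"
    unfolding cnj_sum by (rule dsum)
  also have "\<dots> = - (cnj ((A *v z)$None) * (A *v z)$None) + (\<Sum>i\<in>UNIV. cnj ((A *v z)$Some i) * (A *v z)$Some i)"
    by (simp only: matrix_vector_mult_def vec_lambda_beta)
  also have "\<dots> = of_real (qf (A *v z))"
    unfolding qf_def of_real_add of_real_minus of_real_sum cnorm_sq ..
  finally show ?thesis .
qed

lemma mat1_conj: "conj_transpose (mat 1 :: complex^'a::finite^'a) = mat 1"
  by (simp add: conj_transpose_def mat_def vec_eq_iff)

lemma Pf_J: "Pf (Jn1 :: complex^('n::finite option)^('n option)) z = of_real (qf z)"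
  using Pf_qf[of "mat 1" z] by (simp add: mat1_conj)

lemma U_qf: "M \<in> U_n1 \<Longrightarrow> qf (M *v z) = qf z"
  using Pf_qf[of M z] Pf_J[of z] by (simp add: U_n1_def)

lemma U_Cn1: "M \<in> U_n1 \<Longrightarrow> z \<in> Cn1 \<Longrightarrow> M *v z \<in> Cn1"
  by (simp add: Cn1_iff U_qf)

definition mob :: "complex^('n::finite option)^('n option) \<Rightarrow> complex^'n \<Rightarrow> complex^'n" where
  "mob M w = Wp (M *v emb w)"

lemma mob_in: "M \<in> U_n1 \<Longrightarrow> norm w < 1 \<Longrightarrow> norm (mob M w) < 1"
  unfolding mob_def using Wp_in U_Cn1 emb_in by fastforce

lemma mob_comp:
  assumes M: "M \<in> U_n1" and N: "N \<in> U_n1" and w: "norm w < 1"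
  shows "mob M (mob N w) = mob (M ** N) w"
proof -
  let ?z = "N *v emb w"
  have z: "?z \<in> Cn1" using U_Cn1[OF N] emb_in w by blast
  then have s: "?z $ None \<noteq> 0" by (rule Cn1_None)
  have "emb (mob N w) = inverse (?z $ None) *s ?z"
    unfolding vec_eq_iff using s by (auto simp: mob_def emb_def field_simps split: option.split)
  then have "M *v emb (mob N w) = inverse (?z $ None) *s ((M ** N) *v emb w)"
    by (simp add: vector_scalar_commute matrix_vector_mul_assoc)
  then show ?thesis unfolding mob_def using s by (simp add: Wp_scale)
qed

lemma conj_transpose_mult: "conj_transpose (A ** B) = conj_transpose B ** conj_transpose (A :: complex^'a::finite^'a)"
  by (simp add: conj_transpose_def matrix_matrix_mult_def vec_eq_iff cnj_sum mult.commute)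

lemma conj_transpose_conj_transpose[simp]: "conj_transpose (conj_transpose A) = (A :: complex^'a::finite^'a)"
  by (simp add: conj_transpose_def vec_eq_iff)

lemma conj_transpose_J: "conj_transpose (Jn1 :: complex^('n::finite option)^('n option)) = Jn1"
  by (simp add: conj_transpose_def Jn1_def vec_eq_iff)

lemma JJ: "(Jn1 :: complex^('n::finite option)^('n option)) ** Jn1 = mat 1"
  by (simp add: matrix_matrix_mult_def Jn1_nth mat_def vec_eq_iff if_distrib[of "\<lambda>v. _ * v"] sum.delta cong: if_cong)

lemma U_mult: assumes "M \<in> U_n1" "N \<in> U_n1" shows "M ** N \<in> U_n1"
proof -
  have "conj_transpose (M ** N) ** Jn1 ** (M ** N) = conj_transpose N ** (conj_transpose M ** Jn1 ** M) ** N"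
    by (simp add: conj_transpose_mult matrix_mul_assoc)
  then show ?thesis using assms unfolding U_n1_def by simp
qed

definition Uinv :: "complex^('n::finite option)^('n option) \<Rightarrow> complex^('n option)^('n option)" where
  "Uinv M = Jn1 ** conj_transpose M ** Jn1"

lemma Uinv_left: "M \<in> U_n1 \<Longrightarrow> Uinv M ** M = mat 1"
  unfolding Uinv_def U_n1_def by (simp add: matrix_mul_assoc[symmetric] JJ)

lemma Uinv_right: "M \<in> U_n1 \<Longrightarrow> M ** Uinv M = mat 1"
  using Uinv_left matrix_left_right_inverse by blast

lemma Uinv_U: assumes M: "M \<in> U_n1" shows "Uinv M \<in> U_n1"
proof -
  have "M ** Jn1 ** conj_transpose M ** Jn1 = mat 1"
    using Uinv_right[OF M] by (simp add: Uinv_def matrix_mul_assoc)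
  then have "M ** Jn1 ** conj_transpose M = Jn1"
    by (metis JJ matrix_mul_assoc matrix_mul_lid matrix_mul_rid)
  then have e: "M ** (Jn1 ** (conj_transpose M ** X)) = Jn1 ** X" for X
    by (metis matrix_mul_assoc)
  have JJ': "Jn1 ** (Jn1 ** X) = X" for X :: "complex^('n::finite option)^('n option)"
    by (metis JJ matrix_mul_assoc matrix_mul_lid)
  show ?thesis
    unfolding U_n1_def Uinv_def
    by (simp add: conj_transpose_mult conj_transpose_J matrix_mul_assoc[symmetric] JJ' e)
qed

lemma mob_id: "mob (mat 1) w = w"
  by (simp add: mob_def)

lemma mob_holo: "M \<in> U_n1 \<Longrightarrow> vholo_on (ball 0 1) (mob M)"
  unfolding vholo_on_def
proof
  fix i assume M: "M \<in> U_n1"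
  have c: "cholo_on (ball 0 1) (\<lambda>w. (M *v emb w) $ k)" for k
    unfolding matrix_vector_mult_def
    by (simp, rule cholo_sum, simp, rule cholo_mult[OF cholo_const],
        rule cholo_compose[OF vholo_emb _ cholo_nth, where T=UNIV], simp)
  have nz: "w \<in> ball 0 1 \<Longrightarrow> (M *v emb w) $ None \<noteq> 0" for w
    using U_Cn1[OF M] emb_in Cn1_None by fastforce
  show "cholo_on (ball 0 1) (\<lambda>w. mob M w $ i)"
    unfolding mob_def Wp_nth by (rule cholo_divide[OF c c nz])
qed



definition bg :: "complex^'n::finite \<Rightarrow> real" where "bg b = 1 / sqrt (1 - (norm b)\<^sup>2)"
definition bk :: "complex^'n::finite \<Rightarrow> real" where "bk b = (bg b)\<^sup>2 / (1 + bg b)"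

definition boost :: "complex^'n::finite \<Rightarrow> complex^('n option)^('n option)" where
  "boost b = (\<chi> x y. case x of
      None \<Rightarrow> (case y of None \<Rightarrow> of_real (bg b) | Some j \<Rightarrow> of_real (bg b) * cnj (b$j))
    | Some i \<Rightarrow> (case y of None \<Rightarrow> of_real (bg b) * b$i
                        | Some j \<Rightarrow> (if i = j then 1 else 0) + of_real (bk b) * b$i * cnj (b$j)))"

lemma sum_cnj_sq: "(\<Sum>i\<in>UNIV. cnj (b$i) * b$i) = of_real ((norm (b::complex^'n::finite))\<^sup>2)"
  unfolding norm_sq_vec of_real_sum cnorm_sq ..

lemma boost_identities:
  assumes "norm b < 1"
  shows "bg b * bg b * (1 - (norm b)\<^sup>2) = 1" "bk b * (norm b)\<^sup>2 = bg b - 1" "bg b > 0"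
proof -
  have p: "1 - (norm b)\<^sup>2 > 0" using assms by (simp add: power_less_one_iff)
  then show e1: "bg b * bg b * (1 - (norm b)\<^sup>2) = 1"
    by (simp add: bg_def real_sqrt_mult[symmetric] field_simps)
  show g: "bg b > 0" using p by (simp add: bg_def)
  have "bg b * bg b * (1 - (norm b)\<^sup>2) = bg b * bg b - bg b * bg b * (norm b)\<^sup>2"
    by (simp only: right_diff_distrib mult_1_right)
  then have h: "bg b * bg b * (norm b)\<^sup>2 = bg b * bg b - 1" using e1 by linarith
  have "bk b * (norm b)\<^sup>2 = bg b * bg b * (norm b)\<^sup>2 / (1 + bg b)" by (simp add: bk_def power2_eq_square)
  also have "\<dots> = (bg b * bg b - 1) / (1 + bg b)" by (simp only: h)
  also have "\<dots> = bg b - 1" using g by (simp add: field_simps power2_eq_square)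
  finally show "bk b * (norm b)\<^sup>2 = bg b - 1" .
qed

lemma sum3:
  fixes u v w :: "'a::finite \<Rightarrow> complex"
  shows "(\<Sum>k\<in>UNIV. (if k = i then u k else 0) + (if k = j then v k else 0) + c * w k) = u i + v j + c * (\<Sum>k\<in>UNIV. w k)"
  by (simp add: sum.distrib sum_distrib_left sum.delta)

lemma boost_U:
  assumes b: "norm b < 1"
  shows "boost b \<in> U_n1"
proof -
  define g where "g = complex_of_real (bg b)"
  define k where "k = complex_of_real (bk b)"
  define S where "S = complex_of_real ((norm b)\<^sup>2)"
  have E1: "g * g * (1 - S) = 1" using boost_identities(1)[OF b] unfolding g_def S_def
    by (metis of_real_1 of_real_diff of_real_mult)
  have E2: "k * S = g - 1" using boost_identities(2)[OF b] unfolding k_def S_def g_def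
    by (metis of_real_1 of_real_diff of_real_mult)
  have E3: "k * (1 + g) = g * g"
    unfolding k_def g_def using boost_identities(3)[OF b]
    by (simp add: bk_def field_simps power2_eq_square flip: of_real_mult of_real_add)
  have cg: "cnj g = g" "cnj k = k" by (simp_all add: g_def k_def)
  have SS: "(\<Sum>i\<in>UNIV. cnj (b$i) * b$i) = S" by (simp add: S_def sum_cnj_sq)
  have M: "boost b $ None $ None = g" "boost b $ None $ Some j = g * cnj (b$j)"
    "boost b $ Some i $ None = g * b$i"
    "boost b $ Some i $ Some j = (if i = j then 1 else 0) + k * b$i * cnj (b$j)" for i j
    by (simp_all add: boost_def g_def k_def)
  show ?thesis unfolding U_n1_iff
  proof (intro allI)
    fix x y
    show "- cnj (boost b $ None $ x) * boost b $ None $ y +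
          (\<Sum>i\<in>UNIV. cnj (boost b $ Some i $ x) * boost b $ Some i $ y) = Jn1 $ x $ y"
    proof (cases x; cases y)
      assume xy: "x = None" "y = None"
      have "(\<Sum>i\<in>UNIV. cnj (g * b$i) * (g * b$i)) =
            (\<Sum>i\<in>UNIV. (g*g) * (cnj (b$i) * b$i))"
        by (rule sum.cong) (simp_all add: cg algebra_simps)
      also have "\<dots> = g * g * S" by (simp only: sum_distrib_left[symmetric] SS)
      finally have "(\<Sum>i\<in>UNIV. cnj (g * b$i) * (g * b$i)) = g * g * S" .
      then show ?thesis using E1 xy
        by (simp add: M cg Jn1_nth) (simp add: algebra_simps)
    next
      fix j assume xy: "x = None" "y = Some j"
      have "(\<Sum>i\<in>UNIV. cnj (g * b$i) * ((if i = j then 1 else 0) + k * b$i * cnj (b$j)))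
          = (\<Sum>i\<in>UNIV. (if i = j then g * cnj (b$i) else 0) + (if i = j then 0 else 0) + (g * k * cnj (b$j)) * (cnj (b$i) * b$i))"
        by (rule sum.cong) (simp_all add: cg algebra_simps)
      also have "\<dots> = g * cnj (b$j) + g * k * cnj (b$j) * S" by (simp only: sum3 SS) simp
      finally have e: "(\<Sum>i\<in>UNIV. cnj (g * b$i) * ((if i = j then 1 else 0) + k * b$i * cnj (b$j))) = g * cnj (b$j) + g * k * cnj (b$j) * S" .
      have "- (g * (g * cnj (b$j))) + (g * cnj (b$j) + g * k * cnj (b$j) * S) = g * cnj (b$j) * (k * S - (g - 1))"
        by (simp add: algebra_simps)
      also have "\<dots> = 0" using E2 by simp
      finally show ?thesis using xy e by (simp add: M cg Jn1_nth)
    next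
      fix i assume xy: "x = Some i" "y = None"
      have "(\<Sum>k'\<in>UNIV. cnj ((if k' = i then 1 else 0) + k * b$k' * cnj (b$i)) * (g * b$k'))
          = (\<Sum>k'\<in>UNIV. (if k' = i then g * b$k' else 0) + (if k' = i then 0 else 0) + (g * k * b$i) * (cnj (b$k') * b$k'))"
        by (rule sum.cong) (simp_all add: cg algebra_simps)
      also have "\<dots> = g * b$i + g * k * b$i * S" by (simp only: sum3 SS) simp
      finally have e: "(\<Sum>k'\<in>UNIV. cnj ((if k' = i then 1 else 0) + k * b$k' * cnj (b$i)) * (g * b$k')) = g * b$i + g * k * b$i * S" .
      have "- (cnj (g * cnj (b$i)) * g) + (g * b$i + g * k * b$i * S) = g * b$i * (k * S - (g - 1))"
        by (simp add: cg algebra_simps)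
      also have "\<dots> = 0" using E2 by simp
      finally show ?thesis using xy e by (simp add: M Jn1_nth)
    next
      fix i j assume xy: "x = Some i" "y = Some j"
      have "(\<Sum>k'\<in>UNIV. cnj ((if k' = i then 1 else 0) + k * b$k' * cnj (b$i)) * ((if k' = j then 1 else 0) + k * b$k' * cnj (b$j)))
          = (\<Sum>k'\<in>UNIV. (if k' = i then (if k' = j then 1 else 0) + k * b$k' * cnj (b$j) else 0)
               + (if k' = j then k * cnj (b$k') * b$i else 0) + (k * k * b$i * cnj (b$j)) * (cnj (b$k') * b$k'))"
        by (rule sum.cong) (simp_all add: cg algebra_simps)
      also have "\<dots> = (if i = j then 1 else 0) + k * b$i * cnj (b$j) + k * cnj (b$j) * b$i + k * k * b$i * cnj (b$j) * S"
        by (simp only: sum3 SS)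
      finally have e: "(\<Sum>k'\<in>UNIV. cnj ((if k' = i then 1 else 0) + k * b$k' * cnj (b$i)) * ((if k' = j then 1 else 0) + k * b$k' * cnj (b$j)))
          = (if i = j then 1 else 0) + k * b$i * cnj (b$j) + k * cnj (b$j) * b$i + k * k * b$i * cnj (b$j) * S" .
      have "- (cnj (g * cnj (b$i)) * (g * cnj (b$j))) + (k * b$i * cnj (b$j) + k * cnj (b$j) * b$i + k * k * b$i * cnj (b$j) * S)
           = b$i * cnj (b$j) * (k * (2 + k * S) - g * g)"
        by (simp add: cg algebra_simps)
      also have "k * (2 + k * S) = g * g"
      proof -
        have "k * (2 + k * S) = k * (2 + (g - 1))" by (simp only: E2)
        also have "\<dots> = k * (1 + g)" by simp
        finally show ?thesis using E3 by simp
      qed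
      finally have z: "- (cnj (g * cnj (b$i)) * (g * cnj (b$j))) + (k * b$i * cnj (b$j) + k * cnj (b$j) * b$i + k * k * b$i * cnj (b$j) * S) = 0"
        by simp
      show ?thesis using xy e z by (simp add: M Jn1_nth algebra_simps)
    qed
  qed
qed

lemma boost_mob0: "norm b < 1 \<Longrightarrow> mob (boost b) 0 = b"
  using boost_identities(3)[of b]
  by (simp add: mob_def vec_eq_iff matrix_vector_mult_def sum_option_UNIV boost_def emb_def)



definition cip :: "complex^'n::finite \<Rightarrow> complex^'n \<Rightarrow> complex" where
  "cip x y = (\<Sum>i\<in>UNIV. x$i * cnj (y$i))"

lemma cnorm_sq': "(complex_of_real (cmod w))\<^sup>2 = cnj w * w"
  by (metis cnorm_sq of_real_power)

lemma cip_self: "cip x x = of_real ((norm x)\<^sup>2)"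
  unfolding cip_def norm_sq_vec of_real_sum
  by (rule sum.cong) (simp_all add: cnorm_sq' mult.commute)

lemma cip_self': "cip x x = (complex_of_real (norm x))\<^sup>2"
  by (simp add: cip_self)

lemma cip_swap: "cip y x = cnj (cip x y)"
  by (simp add: cip_def cnj_sum mult.commute)

lemma cip_add_left: "cip (x + y) z = cip x z + cip y z"
  by (simp add: cip_def algebra_simps sum.distrib)

lemma cip_add_right: "cip x (y + z) = cip x y + cip x z"
  by (simp add: cip_def algebra_simps sum.distrib)

lemma cip_diff_left: "cip (x - y) z = cip x z - cip y z"
  by (simp add: cip_def algebra_simps sum_subtractf)

lemma cip_diff_right: "cip x (y - z) = cip x y - cip x z"
  by (simp add: cip_def algebra_simps sum_subtractf)

lemma cip_scale_left: "cip (c *s x) y = c * cip x y"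
  by (simp add: cip_def sum_distrib_left algebra_simps)

lemma cip_scale_right: "cip x (c *s y) = cnj c * cip x y"
  by (simp add: cip_def sum_distrib_left algebra_simps)

lemma cip_CS: "cmod (cip x y) \<le> norm x * norm y"
proof -
  have "cmod (cip x y) \<le> (\<Sum>i\<in>UNIV. cmod (x$i) * cmod (y$i))"
    unfolding cip_def by (rule order_trans[OF norm_sum]) (simp add: norm_mult)
  also have "\<dots> = (\<Sum>i\<in>UNIV. \<bar>cmod (x$i)\<bar> * \<bar>cmod (y$i)\<bar>)" by simp
  also have "\<dots> \<le> L2_set (\<lambda>i. cmod (x$i)) UNIV * L2_set (\<lambda>i. cmod (y$i)) UNIV"
    by (rule L2_set_mult_ineq)
  finally show ?thesis by (simp add: norm_vec_def)
qed

lemma norm_smult_vec: "norm (c *s (x::complex^'n::finite)) = cmod c * norm x"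
proof -
  have "(norm (c *s x))\<^sup>2 = (cmod c * norm x)\<^sup>2"
    by (simp add: norm_sq_vec norm_mult power_mult_distrib sum_distrib_left)
  then show ?thesis by (simp add: power2_eq_iff_nonneg)
qed

lemma cip_eq_imp:
  assumes e: "norm e = 1" and x: "norm x = cmod c" and c: "cip x e = c"
  shows "x = c *s e"
proof -
  have "cip (x - c *s e) (x - c *s e) = cip x x - cnj c * cip x e - c * cip e x + c * cnj c * cip e e"
    by (simp add: cip_diff_left cip_diff_right cip_scale_left cip_scale_right algebra_simps)
  also have "\<dots> = 0"
    using e x c by (simp add: cip_self cip_swap[of e x] cnorm_sq' algebra_simps)
  finally have "(norm (x - c *s e))\<^sup>2 = 0" by (simp add: cip_self)
  then show ?thesis by simp
qed

lemma norm_add_sq: "(norm (x + y))\<^sup>2 = (norm x)\<^sup>2 + (norm y)\<^sup>2 + 2 * Re (cip x y)"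
proof -
  have "complex_of_real ((norm (x + y))\<^sup>2) = cip x x + cip y y + (cip x y + cnj (cip x y))"
    by (simp add: cip_self'[symmetric] cip_add_left cip_add_right cip_swap[of y x])
  also have "\<dots> = of_real ((norm x)\<^sup>2 + (norm y)\<^sup>2 + 2 * Re (cip x y))"
    by (simp add: cip_self complex_add_cnj)
  finally show ?thesis using of_real_eq_iff by blast
qed

lemma cip_polar:
  assumes "(norm (x + y))\<^sup>2 = (norm (x' + y'))\<^sup>2" "(norm (x + \<i> *s y))\<^sup>2 = (norm (x' + \<i> *s y'))\<^sup>2"
    "norm x = norm x'" "norm y = norm y'"
  shows "cip x y = cip x' y'"
proof -
  have n: "norm (\<i> *s y) = norm y" "norm (\<i> *s y') = norm y'" by (simp_all add: norm_smult_vec)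
  have "Re (cip x y) = Re (cip x' y')" using assms(1,3,4) norm_add_sq[of x y] norm_add_sq[of x' y'] by simp
  moreover have "Re (cip x (\<i> *s y)) = Re (cip x' (\<i> *s y'))"
    using assms(2,3,4) n norm_add_sq[of x "\<i> *s y"] norm_add_sq[of x' "\<i> *s y'"] by simp
  then have "Im (cip x y) = Im (cip x' y')" by (simp add: cip_scale_right)
  ultimately show ?thesis by (simp add: complex_eq_iff)
qed



lemma k_props:
  fixes g :: "complex^'n::finite \<Rightarrow> complex^'n"
  assumes hol: "vholo_on (ball 0 1) g" and into: "\<And>w. norm w < 1 \<Longrightarrow> norm (g w) < 1" and g0: "g 0 = 0"
    and u: "norm u = 1" and e: "norm e \<le> 1"
  shows "(\<lambda>z. cip (g (z *s u)) e) holomorphic_on ball 0 1" "cip (g (0 *s u)) e = 0"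
    "\<And>z. norm z < 1 \<Longrightarrow> norm (cip (g (z *s u)) e) < 1"
proof -
  have inb: "z \<in> ball 0 1 \<Longrightarrow> 0 + z *s u \<in> ball 0 1" for z
    using u by (simp add: norm_smult_vec)
  have "(\<lambda>z. \<Sum>i\<in>UNIV. g (0 + z *s u) $ i * cnj (e$i)) holomorphic_on ball 0 1"
    using hol inb unfolding vholo_on_def
    by (intro holomorphic_on_sum holomorphic_on_mult holomorphic_on_const cholo_line) auto
  then show "(\<lambda>z. cip (g (z *s u)) e) holomorphic_on ball 0 1" by (simp add: cip_def)
  show "cip (g (0 *s u)) e = 0" using g0 by (simp add: cip_def)
  fix z :: complex assume z: "norm z < 1"
  have "norm (cip (g (z *s u)) e) \<le> norm (g (z *s u)) * norm e" by (rule cip_CS)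
  also have "\<dots> \<le> norm (g (z *s u))" using e by (simp add: mult_left_le)
  also have "\<dots> < 1" using into z u by (simp add: norm_smult_vec)
  finally show "norm (cip (g (z *s u)) e) < 1" .
qed

lemma schwarz_le:
  fixes g :: "complex^'n::finite \<Rightarrow> complex^'n"
  assumes hol: "vholo_on (ball 0 1) g" and into: "\<And>w. norm w < 1 \<Longrightarrow> norm (g w) < 1" and g0: "g 0 = 0"
    and w: "norm w < 1"
  shows "norm (g w) \<le> norm w"
proof (cases "g w = 0")
  case False
  then have wnz: "w \<noteq> 0" using g0 by auto
  define u where "u = complex_of_real (inverse (norm w)) *s w"
  define e where "e = complex_of_real (inverse (norm (g w))) *s g w"
  have u1: "norm u = 1" using wnz by (simp add: u_def norm_smult_vec norm_inverse)
  have e1: "norm e \<le> 1" using False by (simp add: e_def norm_smult_vec norm_inverse)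
  define z where "z = complex_of_real (norm w)"
  have zu: "z *s u = w" using wnz by (simp add: z_def u_def vec_eq_iff)
  have kz: "cip (g (z *s u)) e = of_real (norm (g w))"
    using False by (simp add: zu e_def cip_scale_right cip_self power2_eq_square)
  define k where "k = (\<lambda>z. cip (g (z *s u)) e)"
  have kh: "k holomorphic_on ball 0 1" and k0: "k 0 = 0" and kb: "\<And>z. norm z < 1 \<Longrightarrow> norm (k z) < 1"
    using k_props[OF hol into g0 u1 e1] by (simp_all add: k_def)
  have "norm z < 1" using w by (simp add: z_def)
  then have "norm (k z) \<le> norm z"
    using Schwarz_Lemma(1)[OF kh k0 kb] by blast
  then have "norm (cip (g (z *s u)) e) \<le> norm z" by (simp add: k_def)
  then show ?thesis using kz by (simp add: z_def)
qed (simp)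

lemma schwarz_eq_line:
  fixes g :: "complex^'n::finite \<Rightarrow> complex^'n"
  assumes hol: "vholo_on (ball 0 1) g" and into: "\<And>w. norm w < 1 \<Longrightarrow> norm (g w) < 1" and g0: "g 0 = 0"
    and iso: "\<And>w. norm w < 1 \<Longrightarrow> norm (g w) = norm w" and u: "norm u = 1"
  shows "\<exists>e. \<forall>z. cmod z < 1 \<longrightarrow> g (z *s u) = z *s e"
proof -
  define w0 where "w0 = (1/2 :: complex) *s u"
  have nw0: "norm w0 = 1/2" using u by (simp add: w0_def norm_smult_vec)
  have ng: "norm (g w0) = 1/2" using iso nw0 by simp
  define e where "e = (2::complex) *s g w0"
  have e1: "norm e = 1" using ng by (simp add: e_def norm_smult_vec)
  let ?k = "\<lambda>z. cip (g (z *s u)) e"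
  have e1': "norm e \<le> 1" using e1 by simp
  have kh: "?k holomorphic_on ball 0 1" and k0: "?k 0 = 0" and kb: "\<And>z. norm z < 1 \<Longrightarrow> norm (?k z) < 1"
    using k_props[OF hol into g0 u e1'] by simp_all
  have ng': "complex_of_real (norm (g w0)) = 1/2"
  proof -
    have "complex_of_real (norm (g w0)) = complex_of_real (1/2)" by (simp only: ng)
    then show ?thesis by simp
  qed
  have k12: "?k (1/2) = 1/2"
    by (simp add: w0_def[symmetric] e_def cip_scale_right cip_self ng' power2_eq_square)
  have "\<exists>z. norm z < 1 \<and> z \<noteq> 0 \<and> norm (?k z) = norm z"
    by (rule exI[of _ "1/2"]) (simp add: k12)
  then obtain \<alpha> where \<alpha>: "\<And>z. norm z < 1 \<Longrightarrow> ?k z = \<alpha> * z"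
    using Schwarz_Lemma(3)[OF kh k0 kb, of 0] by auto
  have "\<alpha> = 1" using \<alpha>[of "1/2"] k12 by simp
  then have kz: "\<And>z. norm z < 1 \<Longrightarrow> ?k z = z" using \<alpha> by simp
  show ?thesis
  proof (intro exI allI impI)
    fix z :: complex assume z: "cmod z < 1"
    have "norm (g (z *s u)) = cmod z" using iso z u by (simp add: norm_smult_vec)
    then show "g (z *s u) = z *s e" using cip_eq_imp[OF e1 _ kz[OF z]] by simp
  qed
qed



lemma schwarz_linear:
  fixes g :: "complex^'n::finite \<Rightarrow> complex^'n"
  assumes hol: "vholo_on (ball 0 1) g" and into: "\<And>w. norm w < 1 \<Longrightarrow> norm (g w) < 1" and g0: "g 0 = 0"
    and iso: "\<And>w. norm w < 1 \<Longrightarrow> norm (g w) = norm w"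
  shows "\<exists>L. (\<forall>w. norm w < 1 \<longrightarrow> g w = L w) \<and> (\<forall>c h. L (c *s h) = c *s L h) \<and> linear L"
proof -
  have "\<forall>i. \<exists>L. ((\<lambda>z. g z $ i) has_derivative L) (at 0) \<and> clin L"
    using hol unfolding vholo_on_def by (metis cholo_onE centre_in_ball zero_less_one)
  then obtain Lf where Lf: "\<And>i. ((\<lambda>z. g z $ i) has_derivative Lf i) (at 0) \<and> clin (Lf i)"
    by metis
  define LF where "LF h = (\<chi> i. Lf i h)" for h
  have dF: "(g has_derivative LF) (at 0)"
    by (rule has_derivative_vecI) (simp add: LF_def Lf)
  have cF: "LF (c *s h) = c *s LF h" for c h
    using Lf by (simp add: LF_def vec_eq_iff clin_def)
  have linF: "linear LF" using dF has_derivative_bounded_linear bounded_linear.linear by blast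
  have line: "g (z *s u) = z *s LF u" if u: "norm u = 1" and z: "cmod z < 1" for u z
  proof -
    obtain e where e: "\<And>z. cmod z < 1 \<Longrightarrow> g (z *s u) = z *s e"
      using schwarz_eq_line[OF hol into g0 iso u] by blast
    have d1: "((\<lambda>t. g (0 + t *s u)) has_derivative (\<lambda>h. LF (h *s u))) (at 0)"
      using has_derivative_compose[OF has_derivative_line[of 0 u 0], of g LF] dF by simp
    have "((\<lambda>t. 0 + t *s e) has_derivative (\<lambda>h. h *s e)) (at 0)"
      by (rule has_derivative_line)
    then have d2: "((\<lambda>t. g (0 + t *s u)) has_derivative (\<lambda>h. h *s e)) (at 0)"
      by (rule has_derivative_transform_within_open[of _ _ _ _ "ball 0 1"]) (auto simp: e)
    have "(\<lambda>h. LF (h *s u)) = (\<lambda>h. h *s e)" using has_derivative_unique[OF d1 d2] .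
    then have "LF u = e" by (metis vector_smult_lid)
    then show ?thesis using e z by simp
  qed
  have "g w = LF w" if w: "norm w < 1" for w
  proof (cases "w = 0")
    case True then show ?thesis using g0 linF by (simp add: linear_0)
  next
    case False
    define u where "u = complex_of_real (inverse (norm w)) *s w"
    have u1: "norm u = 1" using False by (simp add: u_def norm_smult_vec norm_inverse)
    have wu: "w = complex_of_real (norm w) *s u" using False by (simp add: u_def vec_eq_iff)
    have "g w = complex_of_real (norm w) *s LF u"
      using line[OF u1, of "complex_of_real (norm w)"] w wu by simp
    also have "\<dots> = LF w" using wu cF by metis
    finally show ?thesis .
  qed
  then show ?thesis using cF linF by blast
qed

lemma axis_cip: "cip (axis b 1) (axis a (1::complex)) = (if a = b then 1 else 0)"
  by (simp add: cip_def axis_def if_distrib[of "\<lambda>v. v * _"] sum.delta cong: if_cong)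

lemma iso_unitary:
  fixes L :: "complex^'n::finite \<Rightarrow> complex^'n"
  assumes lin: "linear L" and cL: "\<And>c h. L (c *s h) = c *s L h"
    and iso: "\<And>w. norm w < 1 \<Longrightarrow> norm (L w) = norm w"
  shows "\<exists>D\<in>U_n1. \<forall>w. mob D w = L w"
proof -
  have iso': "norm (L w) = norm w" for w
  proof (cases "w = 0")
    case True then show ?thesis using lin by (simp add: linear_0)
  next
    case False
    define r where "r = inverse (2 * norm w)"
    have r: "r > 0" using False by (simp add: r_def)
    have rw: "r * norm w = 1/2" using False by (simp add: r_def)
    have "norm (complex_of_real r *s w) = 1/2" using rw by (simp add: norm_smult_vec abs_of_pos[OF r])
    then have "norm (L (complex_of_real r *s w)) = 1/2" using iso by simp
    then have "r * norm (L w) = 1/2" using cL by (simp add: norm_smult_vec abs_of_pos[OF r])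
    with rw show ?thesis using r by (metis mult_left_cancel order_less_irrefl)
  qed
  have cipL: "cip (L x) (L y) = cip x y" for x y
    by (rule cip_polar) (simp_all add: iso' linear_add[OF lin, symmetric] cL[symmetric])
  define D :: "complex^('n option)^('n option)" where "D = (\<chi> x y. case x of None \<Rightarrow> (case y of None \<Rightarrow> 1 | Some _ \<Rightarrow> 0)
      | Some a \<Rightarrow> (case y of None \<Rightarrow> 0 | Some b \<Rightarrow> L (axis b 1) $ a))"
  have DE: "D $ None $ None = 1" "D $ None $ Some b = 0" "D $ Some a $ None = 0"
    "D $ Some a $ Some b = L (axis b 1) $ a" for a b
    by (simp_all add: D_def)
  have "D \<in> U_n1"
    unfolding U_n1_iff
  proof (intro allI)
    fix x y
    show "- cnj (D $ None $ x) * D $ None $ y + (\<Sum>i\<in>UNIV. cnj (D $ Some i $ x) * D $ Some i $ y) = Jn1 $ x $ y"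
    proof (cases x; cases y)
      fix a b assume xy: "x = Some a" "y = Some b"
      have "(\<Sum>i\<in>UNIV. cnj (L (axis a 1) $ i) * L (axis b 1) $ i) = cip (L (axis b 1)) (L (axis a 1))"
        by (simp add: cip_def mult.commute)
      also have "\<dots> = (if a = b then 1 else 0)" by (simp add: cipL axis_cip)
      finally show ?thesis using xy by (simp add: DE Jn1_nth)
    qed (simp_all add: DE Jn1_nth)
  qed
  moreover have "mob D w = L w" for w
  proof -
    have Lw: "L w = (\<Sum>b\<in>UNIV. w $ b *s L (axis b 1))"
      by (subst basis_expansion[of w, symmetric]) (simp add: linear_sum[OF lin] cL)
    have "(D *v emb w) $ None = 1"
      by (simp add: matrix_vector_mult_def sum_option_UNIV DE)
    moreover have "(D *v emb w) $ Some a = L w $ a" for a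
      by (simp add: matrix_vector_mult_def sum_option_UNIV DE Lw sum_component mult.commute)
    ultimately show ?thesis by (simp add: mob_def vec_eq_iff)
  qed
  ultimately show ?thesis by blast
qed

lemma aut_ball_0:
  fixes g h :: "complex^'n::finite \<Rightarrow> complex^'n"
  assumes holg: "vholo_on (ball 0 1) g" and holh: "vholo_on (ball 0 1) h"
    and gin: "\<And>w. norm w < 1 \<Longrightarrow> norm (g w) < 1" and hin: "\<And>w. norm w < 1 \<Longrightarrow> norm (h w) < 1"
    and hg: "\<And>w. norm w < 1 \<Longrightarrow> h (g w) = w" and g0: "g 0 = 0" and h0: "h 0 = 0"
  shows "\<exists>D\<in>U_n1. \<forall>w. norm w < 1 \<longrightarrow> g w = mob D w"
proof -
  have iso: "norm (g w) = norm w" if w: "norm w < 1" for w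
  proof -
    have "norm (g w) \<le> norm w" by (rule schwarz_le[OF holg gin g0 w])
    moreover have "norm (h (g w)) \<le> norm (g w)" by (rule schwarz_le[OF holh hin h0 gin[OF w]])
    ultimately show ?thesis using hg[OF w] by simp
  qed
  obtain L where L: "\<And>w. norm w < 1 \<Longrightarrow> g w = L w" and cL: "\<And>c h. L (c *s h) = c *s L h" and lin: "linear L"
    using schwarz_linear[OF holg gin g0 iso] by blast
  have "\<And>w. norm w < 1 \<Longrightarrow> norm (L w) = norm w" using iso L by metis
  then obtain D where "D \<in> U_n1" "\<And>w. mob D w = L w" using iso_unitary[OF lin cL] by blast
  then show ?thesis using L by metis
qed



lemma aut_ball:
  fixes \<phi> \<psi> :: "complex^'n::finite \<Rightarrow> complex^'n"
  assumes hp: "vholo_on (ball 0 1) \<phi>" and hq: "vholo_on (ball 0 1) \<psi>"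
    and pin: "\<And>w. norm w < 1 \<Longrightarrow> norm (\<phi> w) < 1" and qin: "\<And>w. norm w < 1 \<Longrightarrow> norm (\<psi> w) < 1"
    and pq: "\<And>w. norm w < 1 \<Longrightarrow> \<phi> (\<psi> w) = w" and qp: "\<And>w. norm w < 1 \<Longrightarrow> \<psi> (\<phi> w) = w"
  shows "\<exists>A\<in>U_n1. \<forall>w. norm w < 1 \<longrightarrow> \<phi> w = mob A w"
proof -
  define b where "b = \<psi> 0"
  have b: "norm b < 1" using qin by (simp add: b_def)
  define M where "M = boost b"
  have M: "M \<in> U_n1" and M0: "mob M 0 = b" using boost_U[OF b] boost_mob0[OF b] by (simp_all add: M_def)
  define Mi where "Mi = Uinv M"
  have Mi: "Mi \<in> U_n1" using Uinv_U[OF M] by (simp add: Mi_def)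
  have MiM: "Mi ** M = mat 1" and MMi: "M ** Mi = mat 1"
    using Uinv_left[OF M] Uinv_right[OF M] by (simp_all add: Mi_def)
  define G where "G w = \<phi> (mob M w)" for w
  define H where "H w = mob Mi (\<psi> w)" for w
  have holG: "vholo_on (ball 0 1) G"
    unfolding vholo_on_def G_def
  proof
    fix i show "cholo_on (ball 0 1) (\<lambda>w. \<phi> (mob M w) $ i)"
      by (rule cholo_compose[OF mob_holo[OF M], where T="ball 0 1"]) (use hp mob_in[OF M] in \<open>auto simp: vholo_on_def\<close>)
  qed
  have holH: "vholo_on (ball 0 1) H"
    unfolding vholo_on_def H_def
  proof
    fix i show "cholo_on (ball 0 1) (\<lambda>w. mob Mi (\<psi> w) $ i)"
      by (rule cholo_compose[OF hq, where T="ball 0 1"]) (use qin mob_holo[OF Mi] in \<open>auto simp: vholo_on_def\<close>)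
  qed
  have Gin: "norm w < 1 \<Longrightarrow> norm (G w) < 1" for w using pin mob_in[OF M] by (simp add: G_def)
  have Hin: "norm w < 1 \<Longrightarrow> norm (H w) < 1" for w using qin mob_in[OF Mi] by (simp add: H_def)
  have HG: "norm w < 1 \<Longrightarrow> H (G w) = w" for w
    using qp mob_in[OF M] mob_comp[OF Mi M] MiM by (simp add: G_def H_def mob_id)
  have G0: "G 0 = 0" using pq[of 0] by (simp add: G_def M0 b_def)
  have H0: "H 0 = 0" using mob_comp[OF Mi M, of 0] MiM by (simp add: H_def b_def[symmetric] M0[symmetric] mob_id)
  obtain D where D: "D \<in> U_n1" and GD: "\<And>w. norm w < 1 \<Longrightarrow> G w = mob D w"
    using aut_ball_0[OF holG holH Gin Hin HG G0 H0] by blast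
  show ?thesis
  proof (intro bexI allI impI)
    fix w :: "complex^'n" assume w: "norm w < 1"
    define v where "v = mob Mi w"
    have v: "norm v < 1" using mob_in[OF Mi w] by (simp add: v_def)
    have "mob M v = w" using mob_comp[OF M Mi w] MMi by (simp add: v_def mob_id)
    then have "\<phi> w = G v" by (simp add: G_def)
    also have "\<dots> = mob D v" using GD v by simp
    also have "\<dots> = mob (D ** Mi) w" using mob_comp[OF D Mi w] by (simp add: v_def)
    finally show "\<phi> w = mob (D ** Mi) w" .
  qed (rule U_mult[OF D Mi])
qed



theorem theorem2p1:
  fixes f :: "complex^('n::finite option) \<Rightarrow> complex^('n option)"
  assumes "biholo_self (Cn1 :: (complex^('n option)) set) f"
  shows "\<exists>(c :: complex^'n \<Rightarrow> complex) (A :: complex^('n option)^('n option)).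
    cholo_on (ball 0 1) c \<and> (\<forall>w\<in>ball 0 1. c w \<noteq> 0) \<and> PU_rep A \<and>
    ((\<forall>z\<in>Cn1. f z $ None = c (\<chi> i. z $ Some i / z $ None) * z $ None) \<or>
     (\<forall>z\<in>Cn1. f z $ None = c (\<chi> i. z $ Some i / z $ None) * inverse (z $ None))) \<and>
    (\<forall>z\<in>Cn1. \<forall>i::'n. f z $ Some i =
        f z $ None * ((\<Sum>j\<in>UNIV. A $ Some i $ j * z $ j) / (\<Sum>j\<in>UNIV. A $ None $ j * z $ j)))"
proof -
  define g where "g = inv_into Cn1 f"
  have bij: "bij_betw f Cn1 Cn1" and hf: "vholo_on Cn1 f" and hg: "vholo_on Cn1 g"
    using assms by (simp_all add: biholo_self_def g_def)
  have fC: "z \<in> Cn1 \<Longrightarrow> f z \<in> Cn1" for z by (rule bij_betw_apply[OF bij])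
  have gC: "z \<in> Cn1 \<Longrightarrow> g z \<in> Cn1" for z
    unfolding g_def by (rule bij_betw_apply[OF bij_betw_inv_into[OF bij]])
  have sur: "f ` Cn1 = Cn1" using bij_betw_imp_surj_on[OF bij] .
  have fg: "z \<in> Cn1 \<Longrightarrow> f (g z) = z" for z
    unfolding g_def by (rule f_inv_into_f) (simp add: sur)
  have injf: "inj_on f Cn1" using bij_betw_imp_inj_on[OF bij] .
  have gf: "z \<in> Cn1 \<Longrightarrow> g (f z) = z" for z
    using injf unfolding g_def by (simp add: inv_into_f_f)
  define \<phi> where "\<phi> w = Wp (f (emb w))" for w
  define \<psi> where "\<psi> w = Wp (g (emb w))" for w
  have hp: "vholo_on (ball 0 1) \<phi>" unfolding \<phi>_def[abs_def] by (rule phi_holo[OF hf fC])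
  have hq: "vholo_on (ball 0 1) \<psi>" unfolding \<psi>_def[abs_def] by (rule phi_holo[OF hg gC])
  have pin: "norm w < 1 \<Longrightarrow> norm (\<phi> w) < 1" for w unfolding \<phi>_def by (rule phi_in[OF fC])
  have qin: "norm w < 1 \<Longrightarrow> norm (\<psi> w) < 1" for w unfolding \<psi>_def by (rule phi_in[OF gC])
  have pq: "norm w < 1 \<Longrightarrow> \<phi> (\<psi> w) = w" for w unfolding \<phi>_def \<psi>_def by (rule phi_psi[OF hf fC gC fg])
  have qp: "norm w < 1 \<Longrightarrow> \<psi> (\<phi> w) = w" for w unfolding \<phi>_def \<psi>_def by (rule phi_psi[OF hg gC fC gf])
  have fib_f: "z \<in> Cn1 \<Longrightarrow> Wp (f z) = \<phi> (Wp z)" for z unfolding \<phi>_def by (rule fiber_eq[OF hf fC])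
  have fib_g: "z \<in> Cn1 \<Longrightarrow> Wp (g z) = \<psi> (Wp z)" for z unfolding \<psi>_def by (rule fiber_eq[OF hg gC])
  obtain A where A: "A \<in> U_n1" and pA: "\<And>w. norm w < 1 \<Longrightarrow> \<phi> w = mob A w"
    using aut_ball[OF hp hq pin qin pq qp] by blast
  have comp: "f z $ Some i = f z $ None * ((\<Sum>j\<in>UNIV. A $ Some i $ j * z $ j) / (\<Sum>j\<in>UNIV. A $ None $ j * z $ j))"
    if z: "z \<in> Cn1" for z i
  proof -
    have z0: "z $ None \<noteq> 0" using Cn1_None[OF z] .
    have wz: "norm (Wp z) < 1" using Wp_in[OF z] by simp
    have "A *v z = (z $ None) *s (A *v emb (Wp z))"
      by (subst decomp[OF z0]) (simp add: vector_scalar_commute)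
    then have "Wp (A *v z) = mob A (Wp z)" using z0 by (simp add: mob_def Wp_scale)
    also have "\<dots> = Wp (f z)" using pA[OF wz] fib_f[OF z] by simp
    finally have "Wp (f z) $ i = Wp (A *v z) $ i" by simp
    then have "f z $ Some i / f z $ None = (A *v z) $ Some i / (A *v z) $ None" by simp
    moreover have "f z $ None \<noteq> 0" using Cn1_None[OF fC[OF z]] .
    ultimately show ?thesis by (simp add: matrix_vector_mult_def field_simps)
  qed
  define cc where "cc w = f (emb w) $ None" for w
  have fiber_form: "(\<forall>t. t \<noteq> 0 \<longrightarrow> f (t *s emb w) $ None = cc w * t) \<or> (\<forall>t. t \<noteq> 0 \<longrightarrow> f (t *s emb w) $ None = cc w / t)"
    if w: "norm w < 1" for w
  proof -
    define F where "F t = f (t *s emb w) $ None" for t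
    have inC: "t \<noteq> 0 \<Longrightarrow> t *s emb w \<in> Cn1" for t using scale_emb_in w by blast
    have holF: "F holomorphic_on (-{0})"
    proof -
      have "(\<lambda>t. f (0 + t *s emb w) $ None) holomorphic_on (-{0})"
        using hf inC unfolding vholo_on_def by (intro cholo_line) auto
      then show ?thesis by (simp add: F_def[abs_def])
    qed
    have fF: "t \<noteq> 0 \<Longrightarrow> f (t *s emb w) = F t *s emb (\<phi> w)" for t
    proof -
      assume t: "t \<noteq> 0"
      have "Wp (f (t *s emb w)) = \<phi> w" using fib_f[OF inC[OF t]] t by (simp add: Wp_scale)
      then show ?thesis using decomp[OF Cn1_None[OF fC[OF inC[OF t]]]] by (simp add: F_def)
    qed
    have injF: "inj_on F (-{0})"
    proof (rule inj_onI)
      fix t1 t2 assume t: "t1 \<in> -{0}" "t2 \<in> -{0}" and e: "F t1 = F t2"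
      then have "f (t1 *s emb w) = f (t2 *s emb w)" using fF by auto
      then have "t1 *s emb w = t2 *s emb w" using injf inC t by (auto dest: inj_onD)
      then have "(t1 *s emb w) $ None = (t2 *s emb w) $ None" by (rule arg_cong)
      then show "t1 = t2" by (simp only: vector_smult_component emb_None mult_1_right)
    qed
    have imgF: "F ` (-{0}) = -{0}"
    proof
      show "F ` (-{0}) \<subseteq> -{0}"
      proof
        fix y assume "y \<in> F ` (-{0})"
        then obtain t where t: "t \<noteq> 0" "y = F t" by auto
        then show "y \<in> -{0}" using Cn1_None[OF fC[OF inC[OF t(1)]]] by (simp add: F_def)
      qed
      show "-{0} \<subseteq> F ` (-{0})"
      proof
        fix s :: complex assume s: "s \<in> -{0}"
        define z where "z = s *s emb (\<phi> w)"
        have zC: "z \<in> Cn1" using s pin[OF w] scale_emb_in by (auto simp: z_def)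
        define y where "y = g z"
        have yC: "y \<in> Cn1" using gC[OF zC] by (simp add: y_def)
        have y0: "y $ None \<noteq> 0" using Cn1_None[OF yC] .
        have "Wp y = w" using fib_g[OF zC] s qp[OF w] by (simp add: y_def z_def Wp_scale)
        then have yy: "y = (y $ None) *s emb w" using decomp[OF y0] by simp
        have "F (y $ None) = f y $ None" using yy by (simp add: F_def)
        also have "\<dots> = s" using fg[OF zC] by (simp add: y_def z_def)
        finally show "s \<in> F ` (-{0})" using y0 by force
      qed
    qed
    obtain c where c: "c \<noteq> 0" "(\<forall>t. t \<noteq> 0 \<longrightarrow> F t = c * t) \<or> (\<forall>t. t \<noteq> 0 \<longrightarrow> F t = c / t)"
      using autCstar[OF holF injF imgF] by blast
    have F1: "F 1 = cc w" by (simp add: F_def cc_def)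
    from c(2) show ?thesis
    proof
      assume h: "\<forall>t. t \<noteq> 0 \<longrightarrow> F t = c * t"
      then have "c = cc w" using F1 by (metis mult_1_right one_neq_zero)
      then show ?thesis using h by (simp add: F_def)
    next
      assume h: "\<forall>t. t \<noteq> 0 \<longrightarrow> F t = c / t"
      then have "c = cc w" using F1 by (metis div_by_1 one_neq_zero)
      then show ?thesis using h by (simp add: F_def)
    qed
  qed
  have ccnz: "norm w < 1 \<Longrightarrow> cc w \<noteq> 0" for w
  proof -
    assume "norm w < 1"
    then have "emb w \<in> Cn1" by (simp add: emb_in)
    then show ?thesis using Cn1_None[OF fC] by (simp add: cc_def)
  qed
  have holcc: "cholo_on (ball 0 1) cc"
    unfolding cc_def[abs_def]
    by (rule cholo_compose[OF vholo_emb, where T=Cn1]) (use hf emb_in in \<open>auto simp: vholo_on_def\<close>)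
  \<comment> \<open>the exponent is constant\<close>
  define E where "E w = f ((2::complex) *s emb w) $ None / cc w" for w
  have Eval: "norm w < 1 \<Longrightarrow> E w = 2 \<or> E w = 1/2" for w
    using fiber_form[of w] ccnz[of w] by (auto simp: E_def)
  have Ecase: "norm w < 1 \<Longrightarrow> E w = 2 \<Longrightarrow> (\<forall>t. t \<noteq> 0 \<longrightarrow> f (t *s emb w) $ None = cc w * t)" for w
    using fiber_form[of w] ccnz[of w] by (auto simp: E_def)
  have Ecase2: "norm w < 1 \<Longrightarrow> E w = 1/2 \<Longrightarrow> (\<forall>t. t \<noteq> 0 \<longrightarrow> f (t *s emb w) $ None = cc w / t)" for w
    using fiber_form[of w] ccnz[of w] by (auto simp: E_def)
  have holE: "cholo_on (ball 0 1) E"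
  proof -
    have "cholo_on (ball 0 1) (\<lambda>w. f ((2::complex) *s emb w) $ None)"
      by (rule cholo_compose[OF vholo_scale_emb, where T=Cn1]) (use hf scale_emb_in[of "2::complex"] in \<open>auto simp: vholo_on_def\<close>)
    then show ?thesis unfolding E_def[abs_def] using holcc ccnz by (intro cholo_divide) auto
  qed
  have "E constant_on ball 0 1"
  proof (rule continuous_discrete_range_constant)
    show "connected (ball (0::complex^'n) 1)" by simp
    show "continuous_on (ball 0 1) E"
      using holE cholo_imp_continuous by (intro continuous_at_imp_continuous_on) blast
    fix x :: "complex^'n" assume x: "x \<in> ball 0 1"
    show "\<exists>e>0. \<forall>y. y \<in> ball 0 1 \<and> E y \<noteq> E x \<longrightarrow> e \<le> norm (E y - E x)"
    proof (intro exI[of _ 1] conjI allI impI)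
      fix y assume y: "y \<in> ball 0 1 \<and> E y \<noteq> E x"
      have ex: "E x = 2 \<or> E x = 1/2" using Eval[of x] x by simp
      have ey: "E y = 2 \<or> E y = 1/2" using Eval[of y] y by simp
      consider "E x = 2" "E y = 1/2" | "E x = 1/2" "E y = 2" using ex ey y by metis
      then show "1 \<le> norm (E y - E x)"
      proof cases
        case 1
        then show ?thesis by (simp only: 1) simp
      next
        case 2
        then show ?thesis by (simp only: 2) simp
      qed
    qed simp
  qed
  then have Econst: "norm w < 1 \<Longrightarrow> E w = E 0" for w by (auto simp: constant_on_def)
  have main0: "(\<forall>z\<in>Cn1. f z $ None = cc (\<chi> i. z $ Some i / z $ None) * z $ None) \<or>
     (\<forall>z\<in>Cn1. f z $ None = cc (\<chi> i. z $ Some i / z $ None) * inverse (z $ None))"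
  proof (cases "E 0 = 2")
    case True
    show ?thesis
    proof (rule disjI1, intro ballI)
      fix z :: "complex^('n option)" assume z: "z \<in> Cn1"
      have wz: "norm (Wp z) < 1" using Wp_in[OF z] by simp
      have "f z $ None = f ((z $ None) *s emb (Wp z)) $ None" using decomp[OF Cn1_None[OF z]] by simp
      also have "\<dots> = cc (Wp z) * z $ None" using Ecase[OF wz] Econst[OF wz] True Cn1_None[OF z] by simp
      finally show "f z $ None = cc (\<chi> i. z $ Some i / z $ None) * z $ None" by (simp add: Wp_def)
    qed
  next
    case False
    then have E0: "E 0 = 1/2" using Eval[of 0] by simp
    show ?thesis
    proof (rule disjI2, intro ballI)
      fix z :: "complex^('n option)" assume z: "z \<in> Cn1"
      have wz: "norm (Wp z) < 1" using Wp_in[OF z] by simp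
      have "f z $ None = f ((z $ None) *s emb (Wp z)) $ None" using decomp[OF Cn1_None[OF z]] by simp
      also have "\<dots> = cc (Wp z) / z $ None" using Ecase2[OF wz] Econst[OF wz] E0 Cn1_None[OF z] by simp
      finally show "f z $ None = cc (\<chi> i. z $ Some i / z $ None) * inverse (z $ None)"
        by (simp add: Wp_def divide_inverse)
    qed
  qed
  have PU: "PU_rep A"
    unfolding PU_rep_def using A by (intro exI[of _ 1] exI[of _ A]) (simp add: vec_eq_iff)
  show ?thesis
    using holcc ccnz PU main0 comp by (intro exI[of _ cc] exI[of _ A]) auto
qed


end
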